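(* Let $k\geq 0$ and $\mathcal{P}\subseteq\mathbb{Z}_{\geq0}$, working with formal power series over a commutative ring $R\supseteq\mathbb{Q}$. Then $$P^{k,\mathcal{P}}(u,z)=F^{k,\mathcal{P}}(u,z)\,e^{T^{k,\mathcal{P}}(u,z)}.$$
   Context: $[n]=\{1,\dots,n\}$. Labeled rooted tree: tree on vertex set $[m]$ with a distinguished root; children of $v$ are its neighbours farther from the root; the height of a vertex $v$ is the maximal distance from $v$ down to a leaf of its subtree; a tree satisfies $\mathcal{P}$ if each vertex has a number of children in $\mathcal{P}$. $T^{k,\mathcal{P}}(u,z)=\sum_t u^{\chi_k(t)}z^{|t|}/|t|!$ over all labeled rooted trees satisfying $\mathcal{P}$, $\chi_k(t)$ = number of vertices of height $<k$. $F^{k,\mathcal{P}}(u,z)=\sum_{n\ge0}\frac{z^n}{n!}\sum_f u^{\,n-|f^k([n])|}$ over functions $f:[n]\to[n]$ with $|f^{-1}(x)|\in\mathcal{P}$ for all $x$. $P^{k,\mathcal{P}}(u,z)$ is defined by the same formula but summing over partial functions $f$ on $[n]$ (maps from some subset $S\subseteq[n]$ into $[n]$) with $|f^{-1}(x)|\in\mathcal{P}$ for every $x\in[n]$; here $f^k([n])$ is the set of values $f^k(x)$ over $x$ at which $f^k$ is defined. $e^w=\sum w^n/n!$. *)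

theory Defs
  imports "HOL-Library.FuncSet" "HOL-Computational_Algebra.Polynomial" "HOL-Computational_Algebra.Formal_Power_Series"
begin

text \<open>Bivariate formal power series in u and z over R are represented as power series in z
  whose coefficients are polynomials in u, i.e. the type ('a poly) fps.  This is legitimate because
  every z-coefficient of the series below is a polynomial in u.\<close>

definition natinv :: "nat \<Rightarrow> 'a::comm_ring_1" where
  "natinv n = (THE x. of_nat n * x = 1)"

text \<open>Labeled rooted trees on [m]: a root r and a parent map p; p v is the parent of v for
  v \<noteq> r, p is 0 at the root and outside [m] (canonical representative), and every vertex
  reaches the root by following parents.\<close>
definition rooted_trees :: "nat \<Rightarrow> (nat \<times> (nat \<Rightarrow> nat)) set" where
  "rooted_trees m = {(r, p). r \<in> {1..m} \<and>
      (\<forall>v. v \<in> {1..m} - {r} \<longrightarrow> p v \<in> {1..m}) \<and>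
      (\<forall>v. v \<notin> {1..m} - {r} \<longrightarrow> p v = 0) \<and>
      (\<forall>v\<in>{1..m}. \<exists>n. (p ^^ n) v = r)}"

definition children :: "nat \<Rightarrow> (nat \<Rightarrow> nat) \<Rightarrow> nat \<Rightarrow> nat set" where
  "children m p v = {w \<in> {1..m}. p w = v}"

definition tree_height :: "nat \<Rightarrow> (nat \<Rightarrow> nat) \<Rightarrow> nat \<Rightarrow> nat" where
  "tree_height m p v = Max {n. \<exists>w\<in>{1..m}. (p ^^ n) w = v}"

definition chi :: "nat \<Rightarrow> nat \<Rightarrow> (nat \<Rightarrow> nat) \<Rightarrow> nat" where
  "chi k m p = card {v \<in> {1..m}. tree_height m p v < k}"

definition trees_P :: "nat set \<Rightarrow> nat \<Rightarrow> (nat \<times> (nat \<Rightarrow> nat)) set" where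
  "trees_P Ps m = {(r, p) \<in> rooted_trees m. \<forall>v\<in>{1..m}. card (children m p v) \<in> Ps}"

definition Tgf :: "nat \<Rightarrow> nat set \<Rightarrow> 'a::comm_ring_1 poly fps" where
  "Tgf k Ps = Abs_fps (\<lambda>m. smult (natinv (fact m))
       (\<Sum>t\<in>trees_P Ps m. monom 1 (chi k m (snd t))))"

definition funs_P :: "nat set \<Rightarrow> nat \<Rightarrow> (nat \<Rightarrow> nat) set" where
  "funs_P Ps n = {f \<in> {1..n} \<rightarrow>\<^sub>E {1..n}. \<forall>x\<in>{1..n}. card {y \<in> {1..n}. f y = x} \<in> Ps}"

definition Fgf :: "nat \<Rightarrow> nat set \<Rightarrow> 'a::comm_ring_1 poly fps" where
  "Fgf k Ps = Abs_fps (\<lambda>n. smult (natinv (fact n))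
       (\<Sum>f\<in>funs_P Ps n. monom 1 (n - card ((f ^^ k) ` {1..n}))))"

definition pfuns_P :: "nat set \<Rightarrow> nat \<Rightarrow> (nat \<Rightarrow> nat option) set" where
  "pfuns_P Ps n = {f. (\<forall>x. x \<notin> {1..n} \<longrightarrow> f x = None) \<and>
       (\<forall>x y. f x = Some y \<longrightarrow> y \<in> {1..n}) \<and>
       (\<forall>x\<in>{1..n}. card {y \<in> {1..n}. f y = Some x} \<in> Ps)}"

fun piter :: "(nat \<Rightarrow> nat option) \<Rightarrow> nat \<Rightarrow> nat \<Rightarrow> nat option" where
  "piter f 0 x = Some x"
| "piter f (Suc k) x = (case piter f k x of None \<Rightarrow> None | Some y \<Rightarrow> f y)"

definition pimage :: "(nat \<Rightarrow> nat option) \<Rightarrow> nat \<Rightarrow> nat \<Rightarrow> nat set" where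
  "pimage f k n = {y. \<exists>x\<in>{1..n}. piter f k x = Some y}"

definition Pgf :: "nat \<Rightarrow> nat set \<Rightarrow> 'a::comm_ring_1 poly fps" where
  "Pgf k Ps = Abs_fps (\<lambda>n. smult (natinv (fact n))
       (\<Sum>f\<in>pfuns_P Ps n. monom 1 (n - card (pimage f k n))))"

text \<open>e^A = \<Sum>_j A^j/j!, for A with zero constant term (terms j > m do not contribute to z^m).\<close>
definition fps_exp_of :: "'a::comm_ring_1 poly fps \<Rightarrow> 'a poly fps" where
  "fps_exp_of A = Abs_fps (\<lambda>m. \<Sum>j\<le>m. smult (natinv (fact j)) (fps_nth (A ^ j) m))"

end

theory Submission
  imports Defs
begin

unbundle fps_syntax


definition pf :: "nat set \<Rightarrow> (nat \<Rightarrow> nat option) \<Rightarrow> bool" where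
  "pf A f \<longleftrightarrow> (\<forall>x. x \<notin> A \<longrightarrow> f x = None) \<and> (\<forall>x y. f x = Some y \<longrightarrow> y \<in> A)"

lemma piter_Suc': "piter f (Suc n) x = (case f x of None \<Rightarrow> None | Some y \<Rightarrow> piter f n y)"
  by (induction n arbitrary: x) (auto split: option.splits)

lemma piter_add: "piter f (m + n) x = (case piter f n x of None \<Rightarrow> None | Some y \<Rightarrow> piter f m y)"
  by (induction m) (auto split: option.splits)

lemma piter_None_mono: "piter f n x = None \<Longrightarrow> n \<le> m \<Longrightarrow> piter f m x = None"
proof (induction m)
  case (Suc m) then show ?case by (cases "n = Suc m") (auto simp: le_Suc_eq)
qed simp

lemma finite_pf: "finite A \<Longrightarrow> finite {f. pf A f}"
proof -
  assume "finite A"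
  have "{f. pf A f} \<subseteq> {f. \<forall>x. (x \<in> A \<longrightarrow> f x \<in> insert None (Some ` A)) \<and> (x \<notin> A \<longrightarrow> f x = None)}"
    unfolding pf_def by auto
  then show ?thesis using finite_set_of_finite_funs[of A "insert None (Some ` A)" None] \<open>finite A\<close>
    by (auto intro: finite_subset)
qed


definition fibc :: "nat set \<Rightarrow> (nat \<Rightarrow> nat option) \<Rightarrow> nat \<Rightarrow> nat" where
  "fibc A f x = card {y \<in> A. f y = Some x}"
definition okP :: "nat set \<Rightarrow> nat set \<Rightarrow> (nat \<Rightarrow> nat option) \<Rightarrow> bool" where
  "okP Ps A f \<longleftrightarrow> (\<forall>x\<in>A. fibc A f x \<in> Ps)"
definition pim :: "(nat \<Rightarrow> nat option) \<Rightarrow> nat \<Rightarrow> nat set \<Rightarrow> nat set" where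
  "pim f k A = {y. \<exists>x\<in>A. piter f k x = Some y}"
definition wt :: "nat \<Rightarrow> nat set \<Rightarrow> (nat \<Rightarrow> nat option) \<Rightarrow> nat" where
  "wt k A f = card (A - pim f k A)"
definition istotal :: "nat set \<Rightarrow> (nat \<Rightarrow> nat option) \<Rightarrow> bool" where
  "istotal A f \<longleftrightarrow> (\<forall>x\<in>A. f x \<noteq> None)"
definition isforest :: "nat set \<Rightarrow> (nat \<Rightarrow> nat option) \<Rightarrow> bool" where
  "isforest A f \<longleftrightarrow> (\<forall>x\<in>A. \<exists>n. piter f n x = None)"
definition istree :: "nat set \<Rightarrow> (nat \<Rightarrow> nat option) \<Rightarrow> bool" where
  "istree A f \<longleftrightarrow> isforest A f \<and> (\<exists>r\<in>A. f r = None \<and> (\<forall>x\<in>A. f x = None \<longrightarrow> x = r))"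
definition cnt :: "nat \<Rightarrow> nat set \<Rightarrow> (nat set \<Rightarrow> (nat \<Rightarrow> nat option) \<Rightarrow> bool) \<Rightarrow> nat set \<Rightarrow> 'a::comm_ring_1 poly" where
  "cnt k Ps Q A = (\<Sum>f \<in> {f. pf A f \<and> okP Ps A f \<and> Q A f}. monom 1 (wt k A f))"

definition restr :: "(nat \<Rightarrow> nat option) \<Rightarrow> nat set \<Rightarrow> nat \<Rightarrow> nat option" where
  "restr f D = (\<lambda>x. if x \<in> D then f x else None)"
definition join :: "nat set \<Rightarrow> (nat \<Rightarrow> nat option) \<Rightarrow> (nat \<Rightarrow> nat option) \<Rightarrow> nat \<Rightarrow> nat option" where
  "join D g h = (\<lambda>x. if x \<in> D then g x else h x)"
definition closed :: "nat set \<Rightarrow> (nat \<Rightarrow> nat option) \<Rightarrow> bool" where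
  "closed D f \<longleftrightarrow> (\<forall>x\<in>D. \<forall>y. f x = Some y \<longrightarrow> y \<in> D)"

lemma pf_closed: "pf A f \<Longrightarrow> closed A f"
  unfolding pf_def closed_def by auto

lemma piter_closed: "closed D f \<Longrightarrow> x \<in> D \<Longrightarrow> piter f n x = Some y \<Longrightarrow> y \<in> D"
proof (induction n arbitrary: y)
  case (Suc n)
  then obtain z where z: "piter f n x = Some z" "f z = Some y" by (auto split: option.splits)
  then have "z \<in> D" using Suc by blast
  then show ?case using z Suc.prems(1) unfolding closed_def by blast
qed simp

lemma piter_restr: "closed D f \<Longrightarrow> x \<in> D \<Longrightarrow> piter (restr f D) n x = piter f n x"
proof (induction n)
  case (Suc n)
  then show ?case using piter_closed[OF Suc.prems(1,2), of n]
    by (auto simp: restr_def split: option.splits)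
qed simp

lemma pim_sub: "pf A f \<Longrightarrow> pim f k A \<subseteq> A"
  unfolding pim_def using piter_closed[OF pf_closed] by blast

lemma wt_alt: "finite A \<Longrightarrow> pf A f \<Longrightarrow> wt k A f = card A - card (pim f k A)"
  unfolding wt_def using pim_sub by (metis card_Diff_subset finite_subset)

context
  fixes A D :: "nat set" and f :: "nat \<Rightarrow> nat option"
  assumes pfA: "pf A f" and DA: "D \<subseteq> A" and cD: "closed D f" and cAD: "closed (A - D) f"
begin

lemma split_pf: "pf D (restr f D)" "pf (A - D) (restr f (A - D))"
proof -
  have c1: "\<And>x y. x \<in> D \<Longrightarrow> f x = Some y \<Longrightarrow> y \<in> D" using cD unfolding closed_def by blast
  have c2: "\<And>x y. x \<in> A - D \<Longrightarrow> f x = Some y \<Longrightarrow> y \<in> A - D" using cAD unfolding closed_def by blast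
  show "pf D (restr f D)" unfolding pf_def restr_def
  proof (intro conjI allI impI)
    fix x y assume "(if x \<in> D then f x else None) = Some y"
    then have "x \<in> D" "f x = Some y" by (auto split: if_splits)
    then show "y \<in> D" using c1 by blast
  qed simp
  show "pf (A - D) (restr f (A - D))" unfolding pf_def restr_def
  proof (intro conjI allI impI)
    fix x y assume "(if x \<in> A - D then f x else None) = Some y"
    then have "x \<in> A - D" "f x = Some y" by (auto split: if_splits)
    then show "y \<in> A - D" using c2 by blast
  qed (simp del: Diff_iff)
qed

lemma split_eq: "f = join D (restr f D) (restr f (A - D))"
proof -
  have "\<And>x. x \<notin> A \<Longrightarrow> f x = None" using pfA unfolding pf_def by blast
  then show ?thesis unfolding join_def restr_def using DA by (auto simp: fun_eq_iff)
qed

lemma split_fib1: "x \<in> D \<Longrightarrow> fibc A f x = fibc D (restr f D) x"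
proof -
  assume x: "x \<in> D"
  have c: "\<And>y. y \<in> A - D \<Longrightarrow> f y = Some x \<Longrightarrow> x \<in> A - D" using cAD unfolding closed_def by blast
  have "{y \<in> A. f y = Some x} = {y \<in> D. restr f D y = Some x}"
  proof (rule set_eqI, rule iffI)
    fix y assume "y \<in> {y \<in> A. f y = Some x}"
    then have y: "y \<in> A" "f y = Some x" by auto
    have "y \<in> D" proof (rule ccontr)
      assume "y \<notin> D" then have "x \<in> A - D" using c y by blast
      then show False using x by blast
    qed
    then show "y \<in> {y \<in> D. restr f D y = Some x}" using y unfolding restr_def by simp
  next
    fix y assume "y \<in> {y \<in> D. restr f D y = Some x}"
    then show "y \<in> {y \<in> A. f y = Some x}" using DA unfolding restr_def by (auto split: if_splits)
  qed
  then show ?thesis unfolding fibc_def by simp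
qed

lemma split_fib2: "x \<in> A - D \<Longrightarrow> fibc A f x = fibc (A - D) (restr f (A - D)) x"
proof -
  assume x: "x \<in> A - D"
  have c: "\<And>y. y \<in> D \<Longrightarrow> f y = Some x \<Longrightarrow> x \<in> D" using cD unfolding closed_def by blast
  have "{y \<in> A. f y = Some x} = {y \<in> A - D. restr f (A - D) y = Some x}"
  proof (rule set_eqI, rule iffI)
    fix y assume "y \<in> {y \<in> A. f y = Some x}"
    then have y: "y \<in> A" "f y = Some x" by auto
    have "y \<notin> D" proof
      assume "y \<in> D" then have "x \<in> D" using c y by blast
      then show False using x by blast
    qed
    then have "y \<in> A - D" using y by blast
    then show "y \<in> {y \<in> A - D. restr f (A - D) y = Some x}" using y unfolding restr_def by simp
  next
    fix y assume "y \<in> {y \<in> A - D. restr f (A - D) y = Some x}"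
    then show "y \<in> {y \<in> A. f y = Some x}" unfolding restr_def by (auto split: if_splits)
  qed
  then show ?thesis unfolding fibc_def by simp
qed

lemma split_okP: "okP Ps A f \<longleftrightarrow> okP Ps D (restr f D) \<and> okP Ps (A - D) (restr f (A - D))"
proof -
  have "okP Ps A f \<longleftrightarrow> (\<forall>x\<in>D. fibc A f x \<in> Ps) \<and> (\<forall>x\<in>A - D. fibc A f x \<in> Ps)"
    unfolding okP_def using DA by blast
  then show ?thesis unfolding okP_def using split_fib1 split_fib2 by simp
qed

lemma piter_split: "x \<in> A \<Longrightarrow> piter f n x = (if x \<in> D then piter (restr f D) n x else piter (restr f (A - D)) n x)"
  using piter_restr[OF cD] piter_restr[OF cAD] by auto

lemma split_pim: "pim f k A = pim (restr f D) k D \<union> pim (restr f (A - D)) k (A - D)"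
proof (rule set_eqI)
  fix y
  show "y \<in> pim f k A \<longleftrightarrow> y \<in> pim (restr f D) k D \<union> pim (restr f (A - D)) k (A - D)"
  proof
    assume "y \<in> pim f k A"
    then obtain x where x: "x \<in> A" "piter f k x = Some y" unfolding pim_def by blast
    show "y \<in> pim (restr f D) k D \<union> pim (restr f (A - D)) k (A - D)"
    proof (cases "x \<in> D")
      case True then show ?thesis using x piter_restr[OF cD True, of k] unfolding pim_def by auto
    next
      case False then have "x \<in> A - D" using x by blast
      then show ?thesis using x piter_restr[OF cAD, of x k] unfolding pim_def by auto
    qed
  next
    assume "y \<in> pim (restr f D) k D \<union> pim (restr f (A - D)) k (A - D)"
    then show "y \<in> pim f k A"
    proof
      assume "y \<in> pim (restr f D) k D"
      then obtain x where x: "x \<in> D" "piter (restr f D) k x = Some y" unfolding pim_def by blast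
      then have "piter f k x = Some y" using piter_restr[OF cD x(1)] by simp
      then show ?thesis using x DA unfolding pim_def by blast
    next
      assume "y \<in> pim (restr f (A - D)) k (A - D)"
      then obtain x where x: "x \<in> A - D" "piter (restr f (A - D)) k x = Some y" unfolding pim_def by blast
      then have "piter f k x = Some y" using piter_restr[OF cAD x(1)] by simp
      then show ?thesis using x unfolding pim_def by blast
    qed
  qed
qed

lemma split_wt: "finite A \<Longrightarrow> wt k A f = wt k D (restr f D) + wt k (A - D) (restr f (A - D))"
proof -
  assume fin: "finite A"
  have s1: "pim (restr f D) k D \<subseteq> D" and s2: "pim (restr f (A-D)) k (A-D) \<subseteq> A - D"
    using pim_sub split_pf by auto
  let ?X = "D - pim (restr f D) k D" and ?Y = "(A - D) - pim (restr f (A - D)) k (A - D)"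
  have eq: "A - pim f k A = ?X \<union> ?Y"
    using split_pim s1 s2 DA by blast
  have fX: "finite ?X" using fin DA finite_subset by blast
  have fY: "finite ?Y" using fin by blast
  have dj: "?X \<inter> ?Y = {}" by blast
  have "card (?X \<union> ?Y) = card ?X + card ?Y" using card_Un_disjoint[OF fX fY dj] .
  then show ?thesis unfolding wt_def eq .
qed

lemma split_forest: "isforest A f \<longleftrightarrow> isforest D (restr f D) \<and> isforest (A - D) (restr f (A - D))"
proof -
  have "(\<exists>n. piter f n x = None) \<longleftrightarrow> (\<exists>n. piter (restr f D) n x = None)" if "x \<in> D" for x
    using piter_restr[OF cD that] by simp
  moreover have "(\<exists>n. piter f n x = None) \<longleftrightarrow> (\<exists>n. piter (restr f (A - D)) n x = None)" if "x \<in> A - D" for x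
    using piter_restr[OF cAD that] by simp
  ultimately show ?thesis unfolding isforest_def using DA by blast
qed

lemma split_total: "istotal A f \<longleftrightarrow> istotal D (restr f D) \<and> istotal (A - D) (restr f (A - D))"
  unfolding istotal_def restr_def using DA by auto

end

lemma join_props:
  assumes DA: "D \<subseteq> A" and g: "pf D g" and h: "pf (A - D) h"
  shows "pf A (join D g h)" "closed D (join D g h)" "closed (A - D) (join D g h)"
    "restr (join D g h) D = g" "restr (join D g h) (A - D) = h"
proof -
  have g1: "\<And>x. x \<notin> D \<Longrightarrow> g x = None" and g2: "\<And>x y. g x = Some y \<Longrightarrow> y \<in> D"
    using g unfolding pf_def by blast+
  have h1: "\<And>x. x \<notin> A - D \<Longrightarrow> h x = None" and h2: "\<And>x y. h x = Some y \<Longrightarrow> y \<in> A - D"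
    using h unfolding pf_def by blast+
  show "pf A (join D g h)" unfolding pf_def join_def
  proof (intro conjI allI impI)
    fix x assume "x \<notin> A" then show "(if x \<in> D then g x else h x) = None" using DA h1 by auto
  next
    fix x y assume "(if x \<in> D then g x else h x) = Some y" then show "y \<in> A"
      using g2 h2 DA by (cases "x \<in> D") auto
  qed
  show "closed D (join D g h)" unfolding closed_def join_def using g2 by simp
  show "closed (A - D) (join D g h)" unfolding closed_def join_def using h2 by simp
  show "restr (join D g h) D = g" unfolding join_def restr_def using g1 by (simp add: fun_eq_iff)
  show "restr (join D g h) (A - D) = h" unfolding join_def restr_def using h1 by (simp add: fun_eq_iff)
qed


lemma finite_cntset: "finite A \<Longrightarrow> finite {f. pf A f \<and> P f}"
  using finite_pf by (rule finite_subset[rotated]) auto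

lemma decomp:
  fixes \<sigma> :: "(nat \<Rightarrow> nat option) \<Rightarrow> nat set"
  assumes fin: "finite A" and DD: "\<D> \<subseteq> Pow A"
  and fwd: "\<And>f. pf A f \<Longrightarrow> okP Ps A f \<Longrightarrow> Q A f \<Longrightarrow> \<sigma> f \<in> \<D> \<and> closed (\<sigma> f) f \<and>
     closed (A - \<sigma> f) f \<and> Q1 (\<sigma> f) (restr f (\<sigma> f)) \<and> Q2 (A - \<sigma> f) (restr f (A - \<sigma> f))"
  and bwd: "\<And>D g h. D \<in> \<D> \<Longrightarrow> pf D g \<Longrightarrow> pf (A - D) h \<Longrightarrow> okP Ps D g \<Longrightarrow> okP Ps (A - D) h \<Longrightarrow>
     Q1 D g \<Longrightarrow> Q2 (A - D) h \<Longrightarrow> Q A (join D g h) \<and> \<sigma> (join D g h) = D"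
  shows "(cnt k Ps Q A :: 'a::comm_ring_1 poly) = (\<Sum>D\<in>\<D>. cnt k Ps Q1 D * cnt k Ps Q2 (A - D))"
proof -
  define X where "X = {f. pf A f \<and> okP Ps A f \<and> Q A f}"
  define Y where "Y D = {g. pf D g \<and> okP Ps D g \<and> Q1 D g}" for D
  define Z where "Z D = {h. pf (A - D) h \<and> okP Ps (A - D) h \<and> Q2 (A - D) h}" for D
  define \<Phi> where "\<Phi> f = (\<sigma> f, (restr f (\<sigma> f), restr f (A - \<sigma> f)))" for f
  define \<Psi> where "\<Psi> = (\<lambda>(D, (g, h)). join D g h)"
  define w where "w = (\<lambda>(D, (g, h)). (monom 1 (wt k D g) * monom 1 (wt k (A - D) h) :: 'a poly))"
  have finD: "finite \<D>" using fin DD by (meson finite_Pow_iff finite_subset)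
  have bij: "bij_betw \<Phi> X (SIGMA D:\<D>. Y D \<times> Z D)"
  proof (rule bij_betw_byWitness[where f' = \<Psi>])
    show "\<forall>f\<in>X. \<Psi> (\<Phi> f) = f"
    proof
      fix f assume "f \<in> X"
      then have f: "pf A f" "okP Ps A f" "Q A f" unfolding X_def by auto
      note F = fwd[OF f]
      have "\<sigma> f \<subseteq> A" using F DD by blast
      then show "\<Psi> (\<Phi> f) = f" unfolding \<Psi>_def \<Phi>_def
        using split_eq[OF f(1) _ ] F by simp
    qed
    show "\<forall>y\<in>(SIGMA D:\<D>. Y D \<times> Z D). \<Phi> (\<Psi> y) = y"
    proof
      fix y assume "y \<in> (SIGMA D:\<D>. Y D \<times> Z D)"
      then obtain D g h where y: "y = (D, (g, h))" "D \<in> \<D>" "g \<in> Y D" "h \<in> Z D" by blast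
      have g: "pf D g" "okP Ps D g" "Q1 D g" using y(3) unfolding Y_def by auto
      have h: "pf (A - D) h" "okP Ps (A - D) h" "Q2 (A - D) h" using y(4) unfolding Z_def by auto
      have DA: "D \<subseteq> A" using y(2) DD by blast
      note J = join_props[OF DA g(1) h(1)]
      have "\<sigma> (join D g h) = D" using bwd[OF y(2) g(1) h(1) g(2) h(2) g(3) h(3)] by blast
      then show "\<Phi> (\<Psi> y) = y" unfolding \<Phi>_def \<Psi>_def y(1) using J by simp
    qed
    show "\<Phi> ` X \<subseteq> (SIGMA D:\<D>. Y D \<times> Z D)"
    proof
      fix p assume "p \<in> \<Phi> ` X"
      then obtain f where p: "p = \<Phi> f" "f \<in> X" by blast
      then have f: "pf A f" "okP Ps A f" "Q A f" unfolding X_def by auto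
      note F = fwd[OF f]
      have DA: "\<sigma> f \<subseteq> A" using F DD by blast
      have cl: "closed (\<sigma> f) f" "closed (A - \<sigma> f) f" using F by auto
      note P = split_pf[OF f(1) DA cl] and O = split_okP[OF f(1) DA cl, of Ps]
      show "p \<in> (SIGMA D:\<D>. Y D \<times> Z D)" unfolding p(1) \<Phi>_def Y_def Z_def
        using F P O f(2) by simp
    qed
    show "\<Psi> ` (SIGMA D:\<D>. Y D \<times> Z D) \<subseteq> X"
    proof
      fix f assume "f \<in> \<Psi> ` (SIGMA D:\<D>. Y D \<times> Z D)"
      then obtain p where p: "p \<in> (SIGMA D:\<D>. Y D \<times> Z D)" "f = \<Psi> p" by blast
      obtain D g h where pp: "p = (D, (g, h))" by (metis prod_cases3)
      have y: "f = join D g h" "D \<in> \<D>" "g \<in> Y D" "h \<in> Z D"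
        using p unfolding pp \<Psi>_def by auto
      have g: "pf D g" "okP Ps D g" "Q1 D g" using y(3) unfolding Y_def by auto
      have h: "pf (A - D) h" "okP Ps (A - D) h" "Q2 (A - D) h" using y(4) unfolding Z_def by auto
      have DA: "D \<subseteq> A" using y(2) DD by blast
      note J = join_props[OF DA g(1) h(1)]
      note O = split_okP[OF J(1) DA J(2) J(3), of Ps]
      have "Q A f" using bwd[OF y(2) g(1) h(1) g(2) h(2) g(3) h(3)] y(1) by blast
      then show "f \<in> X" unfolding X_def using J O g h y(1) by simp
    qed
  qed
  have "cnt k Ps Q A = (\<Sum>f\<in>X. w (\<Phi> f))"
    unfolding cnt_def X_def[symmetric]
  proof (rule sum.cong[OF refl])
    fix f assume "f \<in> X"
    then have f: "pf A f" "okP Ps A f" "Q A f" unfolding X_def by auto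
    note F = fwd[OF f]
    have DA: "\<sigma> f \<subseteq> A" using F DD by blast
    have cl: "closed (\<sigma> f) f" "closed (A - \<sigma> f) f" using F by auto
    show "monom 1 (wt k A f) = w (\<Phi> f)" unfolding w_def \<Phi>_def
      using split_wt[OF f(1) DA cl fin, of k] by (simp add: mult_monom)
  qed
  also have "\<dots> = (\<Sum>p\<in>(SIGMA D:\<D>. Y D \<times> Z D). w p)"
    by (rule sum.reindex_bij_betw[OF bij])
  also have "\<dots> = (\<Sum>D\<in>\<D>. \<Sum>p\<in>Y D \<times> Z D. w (D, p))"
  proof -
    have fin2: "\<forall>D\<in>\<D>. finite (Y D \<times> Z D)"
    proof
      fix D assume "D \<in> \<D>"
      then have "D \<subseteq> A" using DD by blast
      then have "finite D" "finite (A - D)" using fin finite_subset by auto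
      then show "finite (Y D \<times> Z D)" unfolding Y_def Z_def
        by (intro finite_cartesian_product finite_cntset)
    qed
    have "(\<Sum>D\<in>\<D>. \<Sum>p\<in>Y D \<times> Z D. w (D, p)) = (\<Sum>(D, p)\<in>(SIGMA D:\<D>. Y D \<times> Z D). w (D, p))"
      by (rule sum.Sigma[OF finD fin2])
    then show ?thesis by (simp only: case_prod_eta)
  qed
  also have "\<dots> = (\<Sum>D\<in>\<D>. cnt k Ps Q1 D * cnt k Ps Q2 (A - D))"
  proof (rule sum.cong[OF refl])
    fix D
    have "(\<Sum>p\<in>Y D \<times> Z D. w (D, p)) = (\<Sum>g\<in>Y D. \<Sum>h\<in>Z D. monom 1 (wt k D g) * monom 1 (wt k (A - D) h))"
      unfolding w_def by (simp add: sum.cartesian_product)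
    also have "\<dots> = cnt k Ps Q1 D * cnt k Ps Q2 (A - D)"
      unfolding cnt_def Y_def Z_def by (simp add: sum_product)
    finally show "(\<Sum>p\<in>Y D \<times> Z D. w (D, p)) = cnt k Ps Q1 D * cnt k Ps Q2 (A - D)" .
  qed
  finally show ?thesis .
qed


definition relab :: "(nat \<Rightarrow> nat) \<Rightarrow> nat set \<Rightarrow> (nat \<Rightarrow> nat option) \<Rightarrow> nat \<Rightarrow> nat option" where
  "relab h A f = (\<lambda>y. if y \<in> h ` A then map_option h (f (inv_into A h y)) else None)"

context
  fixes h :: "nat \<Rightarrow> nat" and A :: "nat set" and f :: "nat \<Rightarrow> nat option"
  assumes inj: "inj_on h A" and pfA: "pf A f"
begin

lemma relab_at: "x \<in> A \<Longrightarrow> relab h A f (h x) = map_option h (f x)"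
  unfolding relab_def using inj by simp

lemma relab_out: "y \<notin> h ` A \<Longrightarrow> relab h A f y = None"
  unfolding relab_def by simp

lemma pf_vals: "f x = Some z \<Longrightarrow> z \<in> A"
  using pfA unfolding pf_def by blast

lemma pf_dom: "f x = Some z \<Longrightarrow> x \<in> A"
  using pfA unfolding pf_def by (metis option.distinct(1))

lemma pf_relab: "pf (h ` A) (relab h A f)"
  unfolding pf_def
proof (intro conjI allI impI)
  fix y assume "y \<notin> h ` A" then show "relab h A f y = None" by (rule relab_out)
next
  fix y z assume H: "relab h A f y = Some z"
  then have "y \<in> h ` A" using relab_out by (metis option.distinct(1))
  then obtain x where x: "x \<in> A" "y = h x" by blast
  then have "map_option h (f x) = Some z" using H relab_at by simp
  then obtain z' where "f x = Some z'" "z = h z'" by blast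
  then show "z \<in> h ` A" using pf_vals by blast
qed

lemma piter_relab: "x \<in> A \<Longrightarrow> piter (relab h A f) n (h x) = map_option h (piter f n x)"
proof (induction n)
  case (Suc n)
  show ?case
  proof (cases "piter f n x")
    case None then show ?thesis using Suc by simp
  next
    case (Some y)
    then have "y \<in> A" using piter_closed[OF pf_closed[OF pfA] Suc.prems] by blast
    then show ?thesis using Suc Some relab_at by simp
  qed
qed simp

lemma fib_relab: "x \<in> A \<Longrightarrow> fibc (h ` A) (relab h A f) (h x) = fibc A f x"
proof -
  assume x: "x \<in> A"
  have "{y \<in> h ` A. relab h A f y = Some (h x)} = h ` {y \<in> A. f y = Some x}"
  proof (rule set_eqI, rule iffI)
    fix y assume "y \<in> {y \<in> h ` A. relab h A f y = Some (h x)}"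
    then obtain y' where y': "y' \<in> A" "y = h y'" "relab h A f (h y') = Some (h x)" by blast
    then have "map_option h (f y') = Some (h x)" using relab_at by simp
    then obtain z where z: "f y' = Some z" "h z = h x" by blast
    then have "z = x" using pf_vals inj x unfolding inj_on_def by blast
    then show "y \<in> h ` {y \<in> A. f y = Some x}" using y' z by blast
  next
    fix y assume "y \<in> h ` {y \<in> A. f y = Some x}"
    then obtain y' where y': "y' \<in> A" "y = h y'" "f y' = Some x" by blast
    then show "y \<in> {y \<in> h ` A. relab h A f y = Some (h x)}" using relab_at by simp
  qed
  moreover have "inj_on h {y \<in> A. f y = Some x}" using inj by (rule inj_on_subset) blast
  ultimately show ?thesis unfolding fibc_def by (simp add: card_image)
qed

lemma okP_relab: "okP Ps (h ` A) (relab h A f) \<longleftrightarrow> okP Ps A f"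
  unfolding okP_def using fib_relab by simp

lemma pim_relab: "pim (relab h A f) k (h ` A) = h ` pim f k A"
proof (rule set_eqI, rule iffI)
  fix y assume "y \<in> pim (relab h A f) k (h ` A)"
  then obtain x where x: "x \<in> A" "piter (relab h A f) k (h x) = Some y" unfolding pim_def by blast
  then have "map_option h (piter f k x) = Some y" using piter_relab by simp
  then obtain z where "piter f k x = Some z" "y = h z" by blast
  then show "y \<in> h ` pim f k A" using x unfolding pim_def by blast
next
  fix y assume "y \<in> h ` pim f k A"
  then obtain x z where x: "x \<in> A" "piter f k x = Some z" "y = h z" unfolding pim_def by blast
  then have "piter (relab h A f) k (h x) = Some y" using piter_relab by simp
  then show "y \<in> pim (relab h A f) k (h ` A)" using x unfolding pim_def by blast
qed

lemma wt_relab: "wt k (h ` A) (relab h A f) = wt k A f"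
proof -
  have sub: "pim f k A \<subseteq> A" using pim_sub[OF pfA] .
  have "h ` A - h ` pim f k A = h ` (A - pim f k A)"
    using inj_on_image_set_diff[OF inj _ sub] by blast
  moreover have "inj_on h (A - pim f k A)" using inj by (rule inj_on_subset) blast
  ultimately show ?thesis unfolding wt_def pim_relab by (simp add: card_image)
qed

lemma total_relab: "istotal (h ` A) (relab h A f) \<longleftrightarrow> istotal A f"
  unfolding istotal_def using relab_at by simp

lemma forest_relab: "isforest (h ` A) (relab h A f) \<longleftrightarrow> isforest A f"
  unfolding isforest_def using piter_relab by simp

lemma tree_relab: "istree (h ` A) (relab h A f) \<longleftrightarrow> istree A f"
proof -
  have "(\<exists>r\<in>h ` A. relab h A f r = None \<and> (\<forall>x\<in>h ` A. relab h A f x = None \<longrightarrow> x = r)) \<longleftrightarrow>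
        (\<exists>r\<in>A. f r = None \<and> (\<forall>x\<in>A. f x = None \<longrightarrow> x = r))"
  proof -
    have "(\<forall>x\<in>h ` A. relab h A f x = None \<longrightarrow> x = h r) \<longleftrightarrow> (\<forall>x\<in>A. f x = None \<longrightarrow> x = r)"
      if r: "r \<in> A" for r
    proof -
      have "(\<forall>x\<in>h ` A. relab h A f x = None \<longrightarrow> x = h r) \<longleftrightarrow> (\<forall>x\<in>A. relab h A f (h x) = None \<longrightarrow> h x = h r)"
        by blast
      also have "\<dots> \<longleftrightarrow> (\<forall>x\<in>A. f x = None \<longrightarrow> x = r)"
        using relab_at inj r unfolding inj_on_def by auto
      finally show ?thesis .
    qed
    then show ?thesis using relab_at by auto
  qed
  then show ?thesis unfolding istree_def forest_relab by simp
qed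

end

lemma relab_eqI:
  assumes inj: "inj_on h A" and pfA: "pf A f" and pfg: "pf (h ` A) g"
    and eq: "\<And>x. x \<in> A \<Longrightarrow> g (h x) = map_option h (f x)"
  shows "relab h A f = g"
proof
  fix y show "relab h A f y = g y"
  proof (cases "y \<in> h ` A")
    case True
    then obtain x where "x \<in> A" "y = h x" by blast
    then show ?thesis using relab_at[OF inj pfA] eq by simp
  next
    case False
    have "g y = None" using pfg False unfolding pf_def by blast
    then show ?thesis using False unfolding relab_def by simp
  qed
qed

lemma relab_inj:
  assumes inj: "inj_on h A" and f1: "pf A f1" and f2: "pf A f2" and eq: "relab h A f1 = relab h A f2"
  shows "f1 = f2"
proof
  fix x show "f1 x = f2 x"
  proof (cases "x \<in> A")
    case True
    have "relab h A f1 (h x) = relab h A f2 (h x)" using eq by simp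
    then have e: "map_option h (f1 x) = map_option h (f2 x)"
      by (simp add: relab_at[OF inj f1 True] relab_at[OF inj f2 True])
    show ?thesis
    proof (cases "f1 x")
      case None then show ?thesis using e by simp
    next
      case (Some z1)
      have "map_option h (f2 x) = Some (h z1)" using e Some by simp
      then obtain z2 where z2: "f2 x = Some z2" "h z1 = h z2" unfolding map_option_eq_Some by metis
      have "z1 \<in> A" using Some f1 unfolding pf_def by blast
      moreover have "z2 \<in> A" using z2(1) f2 unfolding pf_def by blast
      ultimately have "z1 = z2" using inj_onD[OF inj z2(2)] by blast
      then show ?thesis using Some z2 by simp
    qed
  next
    case False
    have "f1 x = None" using f1 False unfolding pf_def by blast
    moreover have "f2 x = None" using f2 False unfolding pf_def by blast
    ultimately show ?thesis by simp
  qed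
qed

lemma relab_cnt:
  assumes inj: "inj_on h A" and fin: "finite A"
    and inv: "\<And>B h' g. inj_on h' B \<Longrightarrow> pf B g \<Longrightarrow> Q (h' ` B) (relab h' B g) = Q B g"
  shows "cnt k Ps Q (h ` A) = cnt k Ps Q A"
proof -
  define X where "X = {f. pf A f \<and> okP Ps A f \<and> Q A f}"
  define Y where "Y = {g. pf (h ` A) g \<and> okP Ps (h ` A) g \<and> Q (h ` A) g}"
  have im: "Y = relab h A ` X"
  proof (rule set_eqI, rule iffI)
    fix g assume "g \<in> Y"
    then have g: "pf (h ` A) g" "okP Ps (h ` A) g" "Q (h ` A) g" unfolding Y_def by auto
    define h' where "h' = inv_into A h"
    have inj': "inj_on h' (h ` A)" unfolding h'_def by (simp add: inj_on_inv_into)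
    have hA: "h' ` h ` A = A" unfolding h'_def using inj by simp
    define f where "f = relab h' (h ` A) g"
    have pff: "pf A f" unfolding f_def using pf_relab[OF inj' g(1)] hA by simp
    have okf: "okP Ps A f" unfolding f_def using okP_relab[OF inj' g(1)] g(2) hA by simp
    have Qf: "Q A f" unfolding f_def using inv[OF inj' g(1)] g(3) hA by simp
    have "relab h A f = g"
    proof (rule relab_eqI[OF inj pff g(1)])
      fix x assume x: "x \<in> A"
      have hx: "h' (h x) = x" unfolding h'_def using inj x by simp
      have "f x = map_option h' (g (h x))"
        unfolding f_def using relab_at[OF inj' g(1), of "h x"] x hx by simp
      moreover have "g (h x) = None \<or> (\<exists>z\<in>A. g (h x) = Some (h z))"
      proof (cases "g (h x)")
        case (Some a)
        then have "a \<in> h ` A" using g(1) unfolding pf_def by blast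
        then show ?thesis using Some by blast
      qed simp
      ultimately show "g (h x) = map_option h (f x)"
        using inj unfolding h'_def by auto
    qed
    then show "g \<in> relab h A ` X" unfolding X_def using pff okf Qf by blast
  next
    fix g assume "g \<in> relab h A ` X"
    then obtain f where f: "g = relab h A f" "pf A f" "okP Ps A f" "Q A f" unfolding X_def by blast
    then show "g \<in> Y" unfolding Y_def using pf_relab okP_relab inv inj by simp
  qed
  have injX: "inj_on (relab h A) X"
    using relab_inj[OF inj] unfolding X_def inj_on_def by blast
  have "cnt k Ps Q (h ` A) = (\<Sum>g\<in>relab h A ` X. monom 1 (wt k (h ` A) g))"
    unfolding cnt_def Y_def[symmetric] im ..
  also have "\<dots> = (\<Sum>f\<in>X. monom 1 (wt k (h ` A) (relab h A f)))"
    by (rule sum.reindex[OF injX, unfolded comp_def])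
  also have "\<dots> = cnt k Ps Q A"
    unfolding cnt_def X_def using wt_relab[OF inj] by simp
  finally show ?thesis .
qed

lemma cnt_card:
  assumes fin: "finite A"
    and inv: "\<And>B h' g. inj_on h' B \<Longrightarrow> pf B g \<Longrightarrow> Q (h' ` B) (relab h' B g) = Q B g"
  shows "cnt k Ps Q A = cnt k Ps Q {1..card A}"
proof -
  obtain h where h: "bij_betw h A {1..card A}" using finite_same_card_bij[OF fin, of "{1..card A}"] by auto
  then have inj: "inj_on h A" and hA: "h ` A = {1..card A}" unfolding bij_betw_def by auto
  have "cnt k Ps Q (h ` A) = cnt k Ps Q A" by (rule relab_cnt[OF inj fin]) (erule (1) inv)
  then show ?thesis unfolding hA by (rule sym)
qed

lemma inv_total: "inj_on h' B \<Longrightarrow> pf B g \<Longrightarrow> istotal (h' ` B) (relab h' B g) = istotal B g"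
  by (rule total_relab)
lemma inv_forest: "inj_on h' B \<Longrightarrow> pf B g \<Longrightarrow> isforest (h' ` B) (relab h' B g) = isforest B g"
  by (rule forest_relab)
lemma inv_tree: "inj_on h' B \<Longrightarrow> pf B g \<Longrightarrow> istree (h' ` B) (relab h' B g) = istree B g"
  by (rule tree_relab)


lemma piter_one: "piter f (Suc 0) x = f x"
  by simp

lemma total_piter: "pf D g \<Longrightarrow> istotal D g \<Longrightarrow> x \<in> D \<Longrightarrow> piter g n x \<noteq> None"
proof (induction n)
  case (Suc n)
  then obtain y where y: "piter g n x = Some y" by blast
  then have "y \<in> D" using piter_closed[OF pf_closed[OF Suc.prems(1)] Suc.prems(3)] by blast
  then have "g y \<noteq> None" using Suc.prems(2) unfolding istotal_def by blast
  then show ?case using y by simp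
qed simp

lemma root_reach: "piter f n x = None \<Longrightarrow> \<exists>i r. piter f i x = Some r \<and> f r = None"
proof (induction n)
  case (Suc n)
  show ?case
  proof (cases "piter f n x")
    case None then show ?thesis using Suc.IH by blast
  next
    case (Some r) then have "f r = None" using Suc.prems by simp
    then show ?thesis using Some by blast
  qed
qed simp

lemma piter_Suc_Some: "f x = Some y \<Longrightarrow> piter f (Suc n) x = piter f n y"
  by (subst piter_Suc') simp

lemma piter_root_None: "f x = None \<Longrightarrow> piter f (Suc m) x = None"
  by (subst piter_Suc') simp

lemma root_unique:
  assumes "piter f j a = Some x" "f x = None" "piter f j' a = Some r" "f r = None"
  shows "x = r"
proof -
  have *: "x = r" if "piter f j a = Some x" "f x = None" "piter f j' a = Some r" "j \<le> j'" for j j' x r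
  proof -
    have "piter f ((j' - j) + j) a = piter f (j' - j) x" using that(1) by (simp add: piter_add)
    then have e: "piter f (j' - j) x = Some r" using that(3,4) by simp
    show ?thesis
    proof (cases "j' - j")
      case 0 then show ?thesis using e by simp
    next
      case (Suc m) then show ?thesis using e piter_root_None[of f x, OF that(2)] by simp
    qed
  qed
  show ?thesis
  proof (cases "j \<le> j'")
    case True then show ?thesis using * assms by blast
  next
    case False then have "j' \<le> j" by simp
    then show ?thesis using *[of j' r j x] assms by simp
  qed
qed

definition totset :: "(nat \<Rightarrow> nat option) \<Rightarrow> nat set \<Rightarrow> nat set" where
  "totset f A = {x \<in> A. \<forall>n. piter f n x \<noteq> None}"

lemma decompP:
  assumes fin: "finite A"
  shows "(cnt k Ps (\<lambda>_ _. True) A :: 'a::comm_ring_1 poly) =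
    (\<Sum>D\<in>Pow A. cnt k Ps istotal D * cnt k Ps isforest (A - D))"
proof (rule decomp[OF fin subset_refl, where \<sigma> = "\<lambda>f. totset f A"])
  fix f assume pfA: "pf A f"
  let ?S = "totset f A"
  have SA: "?S \<subseteq> A" unfolding totset_def by blast
  have cS: "closed ?S f" unfolding closed_def
  proof (intro ballI allI impI)
    fix x y assume x: "x \<in> ?S" and fx: "f x = Some y"
    have "y \<in> A" using pfA fx unfolding pf_def by blast
    moreover have "piter f n y \<noteq> None" for n
    proof -
      have "piter f (Suc n) x \<noteq> None" using x unfolding totset_def by blast
      then show ?thesis using piter_Suc_Some[of f x y n, OF fx] by simp
    qed
    ultimately show "y \<in> ?S" unfolding totset_def by blast
  qed
  have cAS: "closed (A - ?S) f" unfolding closed_def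
  proof (intro ballI allI impI)
    fix x y assume x: "x \<in> A - ?S" and fx: "f x = Some y"
    have yA: "y \<in> A" using pfA fx unfolding pf_def by blast
    obtain n where n: "piter f n x = None" using x unfolding totset_def by blast
    then obtain m where m: "n = Suc m" by (cases n) auto
    then have "piter f m y = None" using n piter_Suc_Some[of f x y m, OF fx] by simp
    then show "y \<in> A - ?S" using yA unfolding totset_def by blast
  qed
  have tot: "istotal ?S (restr f ?S)" unfolding istotal_def restr_def
  proof
    fix x assume "x \<in> ?S"
    then have "piter f (Suc 0) x \<noteq> None" unfolding totset_def by blast
    then show "(if x \<in> ?S then f x else None) \<noteq> None" using \<open>x \<in> ?S\<close> by simp
  qed
  have forest: "isforest (A - ?S) (restr f (A - ?S))" unfolding isforest_def
  proof
    fix x assume x: "x \<in> A - ?S"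
    then obtain n where "piter f n x = None" unfolding totset_def by blast
    then have "piter (restr f (A - ?S)) n x = None" using piter_restr[OF cAS x, of n] by simp
    then show "\<exists>n. piter (restr f (A - ?S)) n x = None" by blast
  qed
  show "?S \<in> Pow A \<and> closed ?S f \<and> closed (A - ?S) f \<and> istotal ?S (restr f ?S) \<and>
        isforest (A - ?S) (restr f (A - ?S))" using SA cS cAS tot forest by blast
next
  fix D g h assume D: "D \<in> Pow A" and g: "pf D g" and h: "pf (A - D) h"
    and tg: "istotal D g" and fh: "isforest (A - D) h"
  have DA: "D \<subseteq> A" using D by blast
  note J = join_props[OF DA g h]
  let ?f = "join D g h"
  have "totset ?f A = D"
  proof (rule set_eqI, rule iffI)
    fix x assume x: "x \<in> totset ?f A"
    show "x \<in> D"
    proof (rule ccontr)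
      assume "x \<notin> D" then have xAD: "x \<in> A - D" using x unfolding totset_def by blast
      then obtain n where "piter h n x = None" using fh unfolding isforest_def by blast
      then have "piter ?f n x = None" using piter_restr[OF J(3) xAD, of n] J(5) by simp
      then show False using x unfolding totset_def by blast
    qed
  next
    fix x assume x: "x \<in> D"
    have "piter ?f n x \<noteq> None" for n
      using piter_restr[OF J(2) x, of n] J(4) total_piter[OF g tg x, of n] by simp
    then show "x \<in> totset ?f A" using x DA unfolding totset_def by blast
  qed
  then show "True \<and> totset ?f A = D" by simp
qed

definition compset :: "(nat \<Rightarrow> nat option) \<Rightarrow> nat \<Rightarrow> nat set \<Rightarrow> nat set" where
  "compset f a A = {x \<in> A. \<exists>i j y. piter f i x = Some y \<and> piter f j a = Some y}"

lemma decompF: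
  assumes fin: "finite A" and aA: "a \<in> A"
  shows "(cnt k Ps isforest A :: 'a::comm_ring_1 poly) =
    (\<Sum>D\<in>{D. D \<subseteq> A \<and> a \<in> D}. cnt k Ps istree D * cnt k Ps isforest (A - D))"
proof (rule decomp[OF fin _, where \<sigma> = "\<lambda>f. compset f a A"])
  show "{D. D \<subseteq> A \<and> a \<in> D} \<subseteq> Pow A" by blast
next
  fix f assume pfA: "pf A f" and fo: "isforest A f"
  let ?S = "compset f a A"
  have SA: "?S \<subseteq> A" unfolding compset_def by blast
  have "piter f 0 a = Some a" by simp
  then have aS: "a \<in> ?S" unfolding compset_def using aA by blast
  have cS: "closed ?S f" unfolding closed_def
  proof (intro ballI allI impI)
    fix x y assume x: "x \<in> ?S" and fx: "f x = Some y"
    have yA: "y \<in> A" using pfA fx unfolding pf_def by blast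
    obtain i j z where ij: "piter f i x = Some z" "piter f j a = Some z" using x unfolding compset_def by blast
    show "y \<in> ?S"
    proof (cases i)
      case 0
      then have "z = x" using ij by simp
      then have "piter f (Suc j) a = Some y" using ij fx by simp
      moreover have "piter f 0 y = Some y" by simp
      ultimately show ?thesis using yA unfolding compset_def by blast
    next
      case (Suc i')
      then have "piter f i' y = Some z" using ij piter_Suc_Some[of f x y i', OF fx] by simp
      then show ?thesis using yA ij(2) unfolding compset_def by blast
    qed
  qed
  have cAS: "closed (A - ?S) f" unfolding closed_def
  proof (intro ballI allI impI)
    fix x y assume x: "x \<in> A - ?S" and fx: "f x = Some y"
    have yA: "y \<in> A" using pfA fx unfolding pf_def by blast
    show "y \<in> A - ?S"
    proof (rule ccontr)
      assume "y \<notin> A - ?S"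
      then have "y \<in> ?S" using yA by blast
      then obtain i j z where ij: "piter f i y = Some z" "piter f j a = Some z" unfolding compset_def by blast
      then have "piter f (Suc i) x = Some z" using piter_Suc_Some[of f x y i, OF fx] by simp
      then have "x \<in> ?S" using ij(2) x unfolding compset_def by blast
      then show False using x by blast
    qed
  qed
  have fo2: "isforest ?S (restr f ?S)" "isforest (A - ?S) (restr f (A - ?S))"
    using split_forest[OF pfA SA cS cAS] fo by auto
  obtain n where "piter f n a = None" using fo aA unfolding isforest_def by blast
  then obtain j r where r: "piter f j a = Some r" "f r = None" using root_reach by blast
  have rA: "r \<in> A" using piter_closed[OF pf_closed[OF pfA] aA r(1)] .
  have "piter f 0 r = Some r" by simp
  then have rS: "r \<in> ?S" unfolding compset_def using rA r(1) by blast
  have tree: "istree ?S (restr f ?S)" unfolding istree_def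
  proof (intro conjI bexI[of _ r])
    show "isforest ?S (restr f ?S)" by (rule fo2(1))
    show "r \<in> ?S" by (rule rS)
    show "restr f ?S r = None" using rS r(2) unfolding restr_def by simp
    show "\<forall>x\<in>?S. restr f ?S x = None \<longrightarrow> x = r"
    proof (intro ballI impI)
      fix x assume x: "x \<in> ?S" and xn: "restr f ?S x = None"
      then have fxn: "f x = None" unfolding restr_def by simp
      obtain i j' z where ij: "piter f i x = Some z" "piter f j' a = Some z" using x unfolding compset_def by blast
      have "i = 0"
      proof (rule ccontr)
        assume "i \<noteq> 0" then obtain m where "i = Suc m" by (cases i) auto
        then show False using ij(1) piter_root_None[of f x, OF fxn] by simp
      qed
      then have "z = x" using ij by simp
      then show "x = r" using root_unique[OF _ fxn r] ij(2) by blast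
    qed
  qed
  show "?S \<in> {D. D \<subseteq> A \<and> a \<in> D} \<and> closed ?S f \<and> closed (A - ?S) f \<and> istree ?S (restr f ?S) \<and>
        isforest (A - ?S) (restr f (A - ?S))" using SA aS cS cAS tree fo2 by blast
next
  fix D g h assume D: "D \<in> {D. D \<subseteq> A \<and> a \<in> D}" and g: "pf D g" and h: "pf (A - D) h"
    and tg: "istree D g" and fh: "isforest (A - D) h"
  have DA: "D \<subseteq> A" and aD: "a \<in> D" using D by auto
  note J = join_props[OF DA g h]
  let ?f = "join D g h"
  have fo: "isforest A ?f" using split_forest[OF J(1) DA J(2) J(3)] J(4,5) tg fh unfolding istree_def by simp
  have "compset ?f a A = D"
  proof (rule set_eqI, rule iffI)
    fix x assume x: "x \<in> compset ?f a A"
    then obtain i j z where ij: "piter ?f i x = Some z" "piter ?f j a = Some z" and xA: "x \<in> A"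
      unfolding compset_def by blast
    show "x \<in> D"
    proof (rule ccontr)
      assume "x \<notin> D" then have xAD: "x \<in> A - D" using xA by blast
      have "z \<in> A - D" using piter_closed[OF J(3) xAD ij(1)] .
      moreover have "z \<in> D" using piter_closed[OF J(2) aD ij(2)] .
      ultimately show False by blast
    qed
  next
    fix x assume x: "x \<in> D"
    obtain r0 where r0: "r0 \<in> D" "g r0 = None" "\<forall>y\<in>D. g y = None \<longrightarrow> y = r0"
      using tg unfolding istree_def by blast
    have reach: "\<exists>i. piter g i y = Some r0" if y: "y \<in> D" for y
    proof -
      obtain n where "piter g n y = None" using tg y unfolding istree_def isforest_def by blast
      then obtain i r where r: "piter g i y = Some r" "g r = None" using root_reach by blast
      have "r \<in> D" using piter_closed[OF pf_closed[OF g] y r(1)] .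
      then have "r = r0" using r0(3) r(2) by blast
      then show ?thesis using r by blast
    qed
    obtain i where i: "piter g i x = Some r0" using reach[OF x] by blast
    obtain j where j: "piter g j a = Some r0" using reach[OF aD] by blast
    have "piter ?f i x = Some r0" using piter_restr[OF J(2) x, of i] J(4) i by simp
    moreover have "piter ?f j a = Some r0" using piter_restr[OF J(2) aD, of j] J(4) j by simp
    ultimately show "x \<in> compset ?f a A" using x DA unfolding compset_def by blast
  qed
  then show "isforest A ?f \<and> compset ?f a A = D" using fo by simp
qed


lemma Praw: "(\<Sum>f\<in>pfuns_P Ps n. monom 1 (n - card (pimage f k n))) = (cnt k Ps (\<lambda>_ _. True) {1..n} :: 'a::comm_ring_1 poly)"
proof -
  have S: "pfuns_P Ps n = {f. pf {1..n} f \<and> okP Ps {1..n} f \<and> True}"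
    unfolding pfuns_P_def pf_def okP_def fibc_def by simp
  show ?thesis unfolding cnt_def S
  proof (rule sum.cong[OF refl])
    fix f assume "f \<in> {f. pf {1..n} f \<and> okP Ps {1..n} f \<and> True}"
    then have pff: "pf {1..n} f" by simp
    have "pimage f k n = pim f k {1..n}" unfolding pimage_def pim_def by simp
    then show "monom 1 (n - card (pimage f k n)) = monom 1 (wt k {1..n} f)"
      using wt_alt[OF _ pff, of k] by simp
  qed
qed

definition tot_of :: "nat \<Rightarrow> (nat \<Rightarrow> nat) \<Rightarrow> nat \<Rightarrow> nat option" where
  "tot_of n f = (\<lambda>x. if x \<in> {1..n} then Some (f x) else None)"

lemma piter_tot_of:
  assumes f: "f \<in> {1..n} \<rightarrow>\<^sub>E {1..n}" and x: "x \<in> {1..n}"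
  shows "piter (tot_of n f) j x = Some ((f ^^ j) x) \<and> (f ^^ j) x \<in> {1..n}"
proof (induction j)
  case 0 then show ?case using x by simp
next
  case (Suc j)
  then have "(f ^^ j) x \<in> {1..n}" by blast
  then have "f ((f ^^ j) x) \<in> {1..n}" by (rule PiE_mem[OF f])
  then show ?case using Suc unfolding tot_of_def by simp
qed

lemma Fraw: "(\<Sum>f\<in>funs_P Ps n. monom 1 (n - card ((f ^^ k) ` {1..n}))) = (cnt k Ps istotal {1..n} :: 'a::comm_ring_1 poly)"
proof -
  define X where "X = {g. pf {1..n} g \<and> okP Ps {1..n} g \<and> istotal {1..n} g}"
  define \<Psi> where "\<Psi> g = (\<lambda>x. if x \<in> {1..n} then the (g x) else undefined)" for g :: "nat \<Rightarrow> nat option"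
  have fib: "card {y \<in> {1..n}. f y = x} = fibc {1..n} (tot_of n f) x" for f x
  proof -
    have "{y \<in> {1..n}. f y = x} = {y \<in> {1..n}. tot_of n f y = Some x}" unfolding tot_of_def by auto
    then show ?thesis unfolding fibc_def by simp
  qed
  have bij: "bij_betw (tot_of n) (funs_P Ps n) X"
  proof (rule bij_betw_byWitness[where f' = \<Psi>])
    show "\<forall>f\<in>funs_P Ps n. \<Psi> (tot_of n f) = f"
    proof
      fix f assume "f \<in> funs_P Ps n"
      then have f: "f \<in> {1..n} \<rightarrow>\<^sub>E {1..n}" unfolding funs_P_def by blast
      show "\<Psi> (tot_of n f) = f"
      proof
        fix x show "\<Psi> (tot_of n f) x = f x"
        proof (cases "x \<in> {1..n}")
          case True then show ?thesis unfolding \<Psi>_def tot_of_def by simp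
        next
          case False then show ?thesis using PiE_arb[OF f False] unfolding \<Psi>_def tot_of_def by simp
        qed
      qed
    qed
    show "\<forall>g\<in>X. tot_of n (\<Psi> g) = g"
    proof
      fix g assume "g \<in> X"
      then have g: "pf {1..n} g" "istotal {1..n} g" unfolding X_def by auto
      show "tot_of n (\<Psi> g) = g"
      proof
        fix x show "tot_of n (\<Psi> g) x = g x"
        proof (cases "x \<in> {1..n}")
          case True
          then have "g x \<noteq> None" using g(2) unfolding istotal_def by blast
          then show ?thesis using True unfolding tot_of_def \<Psi>_def by auto
        next
          case False
          then have "g x = None" using g(1) unfolding pf_def by blast
          then show ?thesis using False unfolding tot_of_def by simp
        qed
      qed
    qed
    show "tot_of n ` funs_P Ps n \<subseteq> X"
    proof
      fix g assume "g \<in> tot_of n ` funs_P Ps n"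
      then obtain f where f: "g = tot_of n f" "f \<in> {1..n} \<rightarrow>\<^sub>E {1..n}"
        "\<forall>x\<in>{1..n}. card {y \<in> {1..n}. f y = x} \<in> Ps" unfolding funs_P_def by blast
      have "pf {1..n} g" unfolding pf_def f(1) tot_of_def
      proof (intro conjI allI impI)
        fix x y assume "(if x \<in> {1..n} then Some (f x) else None) = Some y"
        then have "x \<in> {1..n}" "y = f x" by (auto split: if_splits)
        then show "y \<in> {1..n}" using PiE_mem[OF f(2)] by blast
      qed simp
      moreover have "istotal {1..n} g" unfolding istotal_def f(1) tot_of_def by simp
      moreover have "okP Ps {1..n} g" unfolding okP_def f(1) using f(3) fib by simp
      ultimately show "g \<in> X" unfolding X_def by blast
    qed
    show "\<Psi> ` X \<subseteq> funs_P Ps n"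
    proof
      fix f assume "f \<in> \<Psi> ` X"
      then obtain g where g: "f = \<Psi> g" "pf {1..n} g" "okP Ps {1..n} g" "istotal {1..n} g"
        unfolding X_def by blast
      have tg: "tot_of n f = g"
      proof
        fix x show "tot_of n f x = g x"
        proof (cases "x \<in> {1..n}")
          case True
          then have "g x \<noteq> None" using g(4) unfolding istotal_def by blast
          then show ?thesis using True unfolding g(1) tot_of_def \<Psi>_def by auto
        next
          case False
          then have "g x = None" using g(2) unfolding pf_def by blast
          then show ?thesis using False unfolding tot_of_def by simp
        qed
      qed
      have "f \<in> {1..n} \<rightarrow>\<^sub>E {1..n}"
      proof (rule PiE_I)
        fix x assume x: "x \<in> {1..n}"
        then have "g x \<noteq> None" using g(4) unfolding istotal_def by blast
        then obtain y where y: "g x = Some y" by blast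
        then have "y \<in> {1..n}" using g(2) unfolding pf_def by blast
        then show "f x \<in> {1..n}" using x y unfolding g(1) \<Psi>_def by simp
      next
        fix x assume nx: "x \<notin> {1..n}" then show "f x = undefined" unfolding g(1) \<Psi>_def
          by (simp only: if_not_P[OF nx] if_False)
      qed
      moreover have "\<forall>x\<in>{1..n}. card {y \<in> {1..n}. f y = x} \<in> Ps"
        using g(3) fib[of f] tg unfolding okP_def by simp
      ultimately show "f \<in> funs_P Ps n" unfolding funs_P_def by blast
    qed
  qed
  have "(\<Sum>f\<in>funs_P Ps n. monom 1 (n - card ((f ^^ k) ` {1..n}))) =
        (\<Sum>f\<in>funs_P Ps n. (monom 1 (wt k {1..n} (tot_of n f)) :: 'a poly))"
  proof (rule sum.cong[OF refl])
    fix f assume "f \<in> funs_P Ps n"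
    then have f: "f \<in> {1..n} \<rightarrow>\<^sub>E {1..n}" unfolding funs_P_def by blast
    have pfg: "pf {1..n} (tot_of n f)" unfolding pf_def tot_of_def
    proof (intro conjI allI impI)
      fix x y assume "(if x \<in> {1..n} then Some (f x) else None) = Some y"
      then have "x \<in> {1..n}" "y = f x" by (auto split: if_splits)
      then show "y \<in> {1..n}" using PiE_mem[OF f] by blast
    qed simp
    have "pim (tot_of n f) k {1..n} = (f ^^ k) ` {1..n}"
    proof (rule set_eqI, rule iffI)
      fix y assume "y \<in> pim (tot_of n f) k {1..n}"
      then obtain x where x: "x \<in> {1..n}" "piter (tot_of n f) k x = Some y" unfolding pim_def by blast
      then have "y = (f ^^ k) x" using piter_tot_of[OF f x(1), of k] by simp
      then show "y \<in> (f ^^ k) ` {1..n}" using x(1) by blast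
    next
      fix y assume "y \<in> (f ^^ k) ` {1..n}"
      then obtain x where x: "x \<in> {1..n}" "y = (f ^^ k) x" by blast
      then have "piter (tot_of n f) k x = Some y" using piter_tot_of[OF f x(1), of k] by simp
      then show "y \<in> pim (tot_of n f) k {1..n}" using x(1) unfolding pim_def by blast
    qed
    then show "monom 1 (n - card ((f ^^ k) ` {1..n})) = monom 1 (wt k {1..n} (tot_of n f))"
      using wt_alt[OF _ pfg, of k] by simp
  qed
  also have "\<dots> = (\<Sum>g\<in>X. monom 1 (wt k {1..n} g))"
    by (rule sum.reindex_bij_betw[OF bij])
  finally show ?thesis unfolding cnt_def X_def .
qed


definition tree_of :: "nat \<Rightarrow> nat \<times> (nat \<Rightarrow> nat) \<Rightarrow> nat \<Rightarrow> nat option" where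
  "tree_of m t = (\<lambda>v. if v \<in> {1..m} \<and> v \<noteq> fst t then Some (snd t v) else None)"

definition untree :: "nat \<Rightarrow> (nat \<Rightarrow> nat option) \<Rightarrow> nat \<times> (nat \<Rightarrow> nat)" where
  "untree m g = (THE r. r \<in> {1..m} \<and> g r = None, \<lambda>v. if v \<in> {1..m} \<and> g v \<noteq> None then the (g v) else 0)"

lemma piter_funpow:
  assumes "\<And>u y. g u = Some y \<Longrightarrow> p u = y"
  shows "piter g n w = Some v \<Longrightarrow> (p ^^ n) w = v"
proof (induction n arbitrary: v)
  case (Suc n)
  then obtain u where u: "piter g n w = Some u" "g u = Some v" by (auto split: option.splits)
  then have "(p ^^ n) w = u" using Suc.IH by blast
  then show ?case using assms[OF u(2)] by simp
qed simp

lemma children_fib: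
  assumes H: "\<And>w. w \<in> {1..m} \<Longrightarrow> (g w = None \<longrightarrow> p w = 0) \<and> (\<forall>y. g w = Some y \<longrightarrow> p w = y)"
    and v: "v \<in> {1..m}"
  shows "children m p v = {w \<in> {1..m}. g w = Some v}"
  unfolding children_def
proof (rule set_eqI, rule iffI)
  fix w assume "w \<in> {w \<in> {1..m}. p w = v}"
  then have w: "w \<in> {1..m}" "p w = v" by auto
  show "w \<in> {w \<in> {1..m}. g w = Some v}"
  proof (cases "g w")
    case None then have "p w = 0" using H[OF w(1)] by blast
    then show ?thesis using w v by simp
  next
    case (Some y) then have "p w = y" using H[OF w(1)] by blast
    then show ?thesis using w Some by simp
  qed
next
  fix w assume "w \<in> {w \<in> {1..m}. g w = Some v}"
  then have w: "w \<in> {1..m}" "g w = Some v" by auto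
  then have "p w = v" using H[OF w(1)] by blast
  then show "w \<in> {w \<in> {1..m}. p w = v}" using w by simp
qed

lemma forest_bound: "finite A \<Longrightarrow> \<forall>x\<in>A. \<exists>n. piter f n x = None \<Longrightarrow> \<exists>M. \<forall>x\<in>A. piter f M x = None"
proof (induction A rule: finite_induct)
  case empty then show ?case by simp
next
  case (insert a A)
  then obtain M where M: "\<forall>x\<in>A. piter f M x = None" by blast
  obtain n where n: "piter f n a = None" using insert.prems by blast
  have "\<forall>x\<in>insert a A. piter f (max M n) x = None"
  proof
    fix x assume "x \<in> insert a A"
    then show "piter f (max M n) x = None"
    proof
      assume "x = a" then show ?thesis using piter_None_mono[OF n max.cobounded2] by simp
    next
      assume "x \<in> A" then have "piter f M x = None" using M by blast
      then show ?thesis using piter_None_mono[OF _ max.cobounded1] by blast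
    qed
  qed
  then show ?case by blast
qed

lemma Max_down:
  assumes fin: "finite N" and z: "0 \<in> N" and down: "\<And>n i. n \<in> N \<Longrightarrow> i \<le> n \<Longrightarrow> i \<in> N"
  shows "Max N < k \<longleftrightarrow> k \<notin> N"
proof
  assume lt: "Max N < k" show "k \<notin> N"
  proof
    assume "k \<in> N" then have "k \<le> Max N" by (rule Max_ge[OF fin])
    then show False using lt by simp
  qed
next
  assume k: "k \<notin> N"
  have mN: "Max N \<in> N" using Max_in[OF fin] z by blast
  show "Max N < k"
  proof (rule ccontr)
    assume "\<not> Max N < k" then have "k \<le> Max N" by simp
    then have "k \<in> N" by (rule down[OF mN])
    then show False using k by simp
  qed
qed

context
  fixes m r and p :: "nat \<Rightarrow> nat"
  assumes T: "(r, p) \<in> rooted_trees m"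
begin

lemma rt_all: "r \<in> {1..m} \<and>
      (\<forall>v. v \<in> {1..m} - {r} \<longrightarrow> p v \<in> {1..m}) \<and>
      (\<forall>v. v \<notin> {1..m} - {r} \<longrightarrow> p v = 0) \<and>
      (\<forall>v\<in>{1..m}. \<exists>n. (p ^^ n) v = r)"
  using T unfolding rooted_trees_def mem_Collect_eq case_prod_conv by assumption
lemma rt_r: "r \<in> {1..m}" using rt_all by (elim conjE) assumption
lemma rt_p_in: assumes "v \<in> {1..m} - {r}" shows "p v \<in> {1..m}"
proof -
  have H: "\<forall>v. v \<in> {1..m} - {r} \<longrightarrow> p v \<in> {1..m}" using rt_all by (elim conjE) assumption
  show ?thesis using H[rule_format, OF assms] .
qed
lemma rt_p_out: assumes "v \<notin> {1..m} - {r}" shows "p v = 0"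
proof -
  have H: "\<forall>v. v \<notin> {1..m} - {r} \<longrightarrow> p v = 0" using rt_all by (elim conjE) assumption
  show ?thesis using H[rule_format, OF assms] .
qed
lemma rt_reach: assumes "v \<in> {1..m}" shows "\<exists>n. (p ^^ n) v = r"
proof -
  have H: "\<forall>v\<in>{1..m}. \<exists>n. (p ^^ n) v = r" using rt_all by (elim conjE) assumption
  show ?thesis using H assms by (rule bspec)
qed

lemma to_Some: "tree_of m (r, p) u = Some y \<Longrightarrow> p u = y"
  unfolding tree_of_def by (auto split: if_splits)

lemma to_pf: "pf {1..m} (tree_of m (r, p))"
  unfolding pf_def
proof (intro conjI allI impI)
  fix x assume "x \<notin> {1..m}" then show "tree_of m (r, p) x = None" unfolding tree_of_def
    by (simp del: atLeastAtMost_iff)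
next
  fix x y assume H: "tree_of m (r, p) x = Some y"
  then have "x \<in> {1..m} - {r}" unfolding tree_of_def by (auto split: if_splits)
  then have "p x \<in> {1..m}" by (rule rt_p_in)
  moreover have "y = p x" using to_Some[OF H] by simp
  ultimately show "y \<in> {1..m}" by simp
qed

lemma funpow_piter: "w \<in> {1..m} \<Longrightarrow> (p ^^ n) w = v \<Longrightarrow> v \<noteq> 0 \<Longrightarrow> piter (tree_of m (r, p)) n w = Some v"
proof (induction n arbitrary: v)
  case 0 then show ?case by simp
next
  case (Suc n)
  define u where "u = (p ^^ n) w"
  have pu: "p u = v" using Suc.prems(2) unfolding u_def by simp
  have uin: "u \<in> {1..m} - {r}"
  proof (rule ccontr)
    assume "u \<notin> {1..m} - {r}" then have "p u = 0" by (rule rt_p_out)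
    then show False using pu Suc.prems(3) by simp
  qed
  then have "piter (tree_of m (r, p)) n w = Some u" using Suc.IH[OF Suc.prems(1) u_def[symmetric]] by simp
  moreover have "tree_of m (r, p) u = Some v" using uin pu unfolding tree_of_def by simp
  ultimately show ?case by simp
qed

lemma to_tree: "istree {1..m} (tree_of m (r, p))"
  unfolding istree_def
proof (intro conjI bexI[of _ r])
  show "isforest {1..m} (tree_of m (r, p))" unfolding isforest_def
  proof
    fix v assume v: "v \<in> {1..m}"
    then obtain n where n: "(p ^^ n) v = r" using rt_reach by blast
    have "r \<noteq> 0" using rt_r by simp
    then have "piter (tree_of m (r, p)) n v = Some r" using funpow_piter[OF v n] by simp
    moreover have "tree_of m (r, p) r = None" unfolding tree_of_def by simp
    ultimately have "piter (tree_of m (r, p)) (Suc n) v = None" by simp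
    then show "\<exists>n. piter (tree_of m (r, p)) n v = None" by blast
  qed
  show "r \<in> {1..m}" by (rule rt_r)
  show "tree_of m (r, p) r = None" unfolding tree_of_def by simp
  show "\<forall>x\<in>{1..m}. tree_of m (r, p) x = None \<longrightarrow> x = r"
  proof (intro ballI impI)
    fix x assume x: "x \<in> {1..m}" and H: "tree_of m (r, p) x = None"
    show "x = r"
    proof (rule ccontr)
      assume "x \<noteq> r"
      then have "tree_of m (r, p) x = Some (p x)" using x unfolding tree_of_def by simp
      then show False using H by simp
    qed
  qed
qed

lemma to_children: "v \<in> {1..m} \<Longrightarrow> children m p v = {w \<in> {1..m}. tree_of m (r, p) w = Some v}"
proof (rule children_fib)
  fix w assume w: "w \<in> {1..m}"
  show "(tree_of m (r, p) w = None \<longrightarrow> p w = 0) \<and> (\<forall>y. tree_of m (r, p) w = Some y \<longrightarrow> p w = y)"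
  proof (intro conjI allI impI)
    assume "tree_of m (r, p) w = None"
    then have "w = r" using w unfolding tree_of_def by (auto split: if_splits)
    then have "w \<notin> {1..m} - {r}" by simp
    then show "p w = 0" by (rule rt_p_out)
  next
    fix y assume "tree_of m (r, p) w = Some y" then show "p w = y" by (rule to_Some)
  qed
qed

lemma to_height: "v \<in> {1..m} \<Longrightarrow> tree_height m p v < k \<longleftrightarrow> v \<notin> pim (tree_of m (r, p)) k {1..m}"
proof -
  assume v: "v \<in> {1..m}"
  let ?g = "tree_of m (r, p)"
  define N where "N = {n. \<exists>w\<in>{1..m}. (p ^^ n) w = v}"
  have v0: "v \<noteq> 0" using v by simp
  have N: "N = {n. \<exists>w\<in>{1..m}. piter ?g n w = Some v}"
  proof (rule set_eqI, rule iffI)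
    fix n assume "n \<in> N"
    then obtain w where w: "w \<in> {1..m}" "(p ^^ n) w = v" unfolding N_def by blast
    then have "piter ?g n w = Some v" using funpow_piter[OF w v0] by simp
    then show "n \<in> {n. \<exists>w\<in>{1..m}. piter ?g n w = Some v}" using w(1) by blast
  next
    fix n assume "n \<in> {n. \<exists>w\<in>{1..m}. piter ?g n w = Some v}"
    then obtain w where w: "w \<in> {1..m}" "piter ?g n w = Some v" by blast
    then have "(p ^^ n) w = v" using piter_funpow[of ?g p, OF to_Some] by blast
    then show "n \<in> N" unfolding N_def using w(1) by blast
  qed
  have fo: "\<forall>x\<in>{1..m}. \<exists>n. piter ?g n x = None" using to_tree unfolding istree_def isforest_def by blast
  obtain M where M: "\<forall>x\<in>{1..m}. piter ?g M x = None" using forest_bound[OF _ fo] by blast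
  have "N \<subseteq> {..<M}"
  proof
    fix n assume "n \<in> N"
    then obtain w where w: "w \<in> {1..m}" "piter ?g n w = Some v" unfolding N by blast
    show "n \<in> {..<M}"
    proof (rule ccontr)
      assume "n \<notin> {..<M}" then have "M \<le> n" by simp
      then have "piter ?g n w = None" using piter_None_mono M w(1) by blast
      then show False using w(2) by simp
    qed
  qed
  then have finN: "finite N" using finite_subset by auto
  have z: "0 \<in> N" unfolding N using v by simp
  have down: "i \<in> N" if n: "n \<in> N" and i: "i \<le> n" for n i
  proof -
    obtain w where w: "w \<in> {1..m}" "piter ?g n w = Some v" using n unfolding N by blast
    have "piter ?g (i + (n - i)) w = Some v" using w(2) i by simp
    then obtain u where u: "piter ?g (n - i) w = Some u" "piter ?g i u = Some v"
      by (auto simp: piter_add split: option.splits)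
    have "u \<in> {1..m}" using piter_closed[OF pf_closed[OF to_pf] w(1) u(1)] .
    then show "i \<in> N" unfolding N using u(2) by blast
  qed
  have "tree_height m p v = Max N" unfolding tree_height_def N_def by simp
  then have "tree_height m p v < k \<longleftrightarrow> k \<notin> N" using Max_down[OF finN z down] by simp
  also have "\<dots> \<longleftrightarrow> v \<notin> pim ?g k {1..m}" unfolding N pim_def by simp
  finally show ?thesis .
qed

lemma to_chi: "chi k m p = wt k {1..m} (tree_of m (r, p))"
proof -
  have "{v \<in> {1..m}. tree_height m p v < k} = {1..m} - pim (tree_of m (r, p)) k {1..m}"
  proof (rule set_eqI)
    fix v show "v \<in> {v \<in> {1..m}. tree_height m p v < k} \<longleftrightarrow> v \<in> {1..m} - pim (tree_of m (r, p)) k {1..m}"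
      using to_height[of v] by auto
  qed
  then show ?thesis unfolding chi_def wt_def by simp
qed

end


lemma tree_root_the:
  assumes "istree {1..m} g"
  shows "fst (untree m g) \<in> {1..m} \<and> g (fst (untree m g)) = None \<and>
         (\<forall>x\<in>{1..m}. g x = None \<longrightarrow> x = fst (untree m g))"
proof -
  obtain r0 where r0: "r0 \<in> {1..m}" "g r0 = None" "\<forall>x\<in>{1..m}. g x = None \<longrightarrow> x = r0"
    using assms unfolding istree_def by blast
  have "(THE r. r \<in> {1..m} \<and> g r = None) = r0"
  proof (rule the_equality)
    show "r0 \<in> {1..m} \<and> g r0 = None" using r0 by blast
    fix r assume "r \<in> {1..m} \<and> g r = None" then show "r = r0" using r0(3) by blast
  qed
  moreover have "fst (untree m g) = (THE r. r \<in> {1..m} \<and> g r = None)" unfolding untree_def by (rule fst_conv)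
  ultimately have eq: "fst (untree m g) = r0" by (rule trans[rotated])
  show ?thesis unfolding eq using r0 by (intro conjI)
qed

lemma Traw: "(\<Sum>t\<in>trees_P Ps m. monom 1 (chi k m (snd t))) = (cnt k Ps istree {1..m} :: 'a::comm_ring_1 poly)"
proof -
  define X where "X = {g. pf {1..m} g \<and> okP Ps {1..m} g \<and> istree {1..m} g}"
  have trees_iff: "t \<in> trees_P Ps m \<longleftrightarrow> (fst t, snd t) \<in> rooted_trees m \<and>
       (\<forall>v\<in>{1..m}. card (children m (snd t) v) \<in> Ps)" for t
    unfolding trees_P_def by (cases t) simp
  have bij: "bij_betw (tree_of m) (trees_P Ps m) X"
  proof (rule bij_betw_byWitness[where f' = "untree m"])
    show "\<forall>t\<in>trees_P Ps m. untree m (tree_of m t) = t"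
    proof
      fix t assume t: "t \<in> trees_P Ps m"
      obtain r p where rp: "t = (r, p)" by (cases t)
      have T: "(r, p) \<in> rooted_trees m" using t trees_iff rp by simp
      have tr: "istree {1..m} (tree_of m (r, p))" by (rule to_tree[OF T])
      note R = tree_root_the[OF tr]
      have fst: "fst (untree m (tree_of m (r, p))) = r"
      proof -
        have N: "tree_of m (r, p) r = None" unfolding tree_of_def by simp
        have U: "\<forall>x\<in>{1..m}. tree_of m (r, p) x = None \<longrightarrow> x = fst (untree m (tree_of m (r, p)))"
          using R by (elim conjE)
        have "r = fst (untree m (tree_of m (r, p)))" using U[rule_format, OF rt_r[OF T] N] .
        then show ?thesis by simp
      qed
      have snd: "snd (untree m (tree_of m (r, p))) = p"
      proof
        fix v show "snd (untree m (tree_of m (r, p))) v = p v"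
        proof (cases "v \<in> {1..m} \<and> v \<noteq> r")
          case True then show ?thesis unfolding untree_def tree_of_def by simp
        next
          case False
          then have "v \<notin> {1..m} - {r}" by simp
          then have "p v = 0" by (rule rt_p_out[OF T])
          moreover have "tree_of m (r, p) v = None" using False unfolding tree_of_def by simp
          ultimately show ?thesis unfolding untree_def by simp
        qed
      qed
      show "untree m (tree_of m t) = t" unfolding rp using fst snd by (simp add: prod_eq_iff)
    qed
    show "\<forall>g\<in>X. tree_of m (untree m g) = g"
    proof
      fix g assume "g \<in> X"
      then have g: "pf {1..m} g" "istree {1..m} g" unfolding X_def by auto
      note R = tree_root_the[OF g(2)]
      have U: "\<forall>x\<in>{1..m}. g x = None \<longrightarrow> x = fst (untree m g)" using R by (elim conjE)
      have gN: "g (fst (untree m g)) = None" using R by (elim conjE)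
      show "tree_of m (untree m g) = g"
      proof
        fix v show "tree_of m (untree m g) v = g v"
        proof (cases "v \<in> {1..m} \<and> v \<noteq> fst (untree m g)")
          case True
          have "g v \<noteq> None"
          proof
            assume "g v = None"
            moreover have "v \<in> {1..m}" using True by simp
            ultimately have "v = fst (untree m g)" using U by blast
            then show False using True by simp
          qed
          have e1: "tree_of m (untree m g) v = Some (snd (untree m g) v)" using True unfolding tree_of_def by simp
          have e2: "snd (untree m g) v = the (g v)" using True \<open>g v \<noteq> None\<close> unfolding untree_def by simp
          show ?thesis using e1 e2 \<open>g v \<noteq> None\<close> by simp
        next
          case False
          have "g v = None"
          proof (cases "v \<in> {1..m}")
            case True then have "v = fst (untree m g)" using False by blast
            then show ?thesis using gN by simp
          next
            case False then show ?thesis using g(1) unfolding pf_def by blast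
          qed
          then show ?thesis using False unfolding tree_of_def by simp
        qed
      qed
    qed
    show "tree_of m ` trees_P Ps m \<subseteq> X"
    proof
      fix g assume "g \<in> tree_of m ` trees_P Ps m"
      then obtain r p where rp: "g = tree_of m (r, p)" "(r, p) \<in> trees_P Ps m" by auto
      have T: "(r, p) \<in> rooted_trees m" and C: "\<forall>v\<in>{1..m}. card (children m p v) \<in> Ps"
        using rp(2) trees_iff by auto
      have "okP Ps {1..m} g" unfolding okP_def fibc_def
      proof
        fix v assume v: "v \<in> {1..m}"
        have "card (children m p v) \<in> Ps" using C v by blast
        then show "card {y \<in> {1..m}. g y = Some v} \<in> Ps" using to_children[OF T v] rp(1) by simp
      qed
      then show "g \<in> X" unfolding X_def using to_pf[OF T] to_tree[OF T] rp(1) by simp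
    qed
    show "untree m ` X \<subseteq> trees_P Ps m"
    proof
      fix t assume "t \<in> untree m ` X"
      then obtain g where gt: "t = untree m g" and gX: "g \<in> X" by blast
      then have g: "pf {1..m} g" "okP Ps {1..m} g" "istree {1..m} g" unfolding X_def by auto
      note R = tree_root_the[OF g(3)]
      define r where "r = fst t"
      define p where "p = snd t"
      have rR: "r \<in> {1..m}" and gr: "g r = None" and runi: "\<forall>x\<in>{1..m}. g x = None \<longrightarrow> x = r"
        using R unfolding r_def gt by auto
      have pdef: "p v = (if v \<in> {1..m} \<and> g v \<noteq> None then the (g v) else 0)" for v
        unfolding p_def gt untree_def by simp
      have pS: "p u = y" if "g u = Some y" for u y
      proof -
        have "u \<in> {1..m}" using g(1) that unfolding pf_def by (metis option.distinct(1))
        then show ?thesis using that pdef by simp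
      qed
      have H: "(g w = None \<longrightarrow> p w = 0) \<and> (\<forall>y. g w = Some y \<longrightarrow> p w = y)" if "w \<in> {1..m}" for w
        using pdef pS by simp
      have c1: "\<forall>v. v \<in> {1..m} - {r} \<longrightarrow> p v \<in> {1..m}"
      proof (intro allI impI)
        fix v assume v: "v \<in> {1..m} - {r}"
        then have v1: "v \<in> {1..m}" and v2: "v \<noteq> r" by auto
        have "g v \<noteq> None"
        proof
          assume "g v = None" then have "v = r" using runi v1 by blast
          then show False using v2 by simp
        qed
        then obtain y where y: "g v = Some y" by blast
        then have "y \<in> {1..m}" using g(1) unfolding pf_def by blast
        then show "p v \<in> {1..m}" using pS[OF y] by simp
      qed
      have c2: "\<forall>v. v \<notin> {1..m} - {r} \<longrightarrow> p v = 0"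
      proof (intro allI impI)
        fix v assume v: "v \<notin> {1..m} - {r}"
        show "p v = 0"
        proof (cases "v = r")
          case True then show ?thesis using pdef gr by simp
        next
          case False then have "v \<notin> {1..m}" using v by simp
          then have nc: "\<not> (v \<in> {1..m} \<and> g v \<noteq> None)" by blast
          show ?thesis using pdef[of v] by (simp only: if_not_P[OF nc])
        qed
      qed
      have c3: "\<forall>v\<in>{1..m}. \<exists>n. (p ^^ n) v = r"
      proof
        fix v assume v: "v \<in> {1..m}"
        obtain n where "piter g n v = None" using g(3) v unfolding istree_def isforest_def by blast
        then obtain i r' where r': "piter g i v = Some r'" "g r' = None" using root_reach by blast
        have "r' \<in> {1..m}" using piter_closed[OF pf_closed[OF g(1)] v r'(1)] .
        then have "r' = r" using runi r'(2) by blast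
        then have "(p ^^ i) v = r" using piter_funpow[of g p, OF pS r'(1)] by simp
        then show "\<exists>n. (p ^^ n) v = r" by blast
      qed
      have T: "(r, p) \<in> rooted_trees m" unfolding rooted_trees_def using rR c1 c2 c3 by simp
      have C: "\<forall>v\<in>{1..m}. card (children m p v) \<in> Ps"
      proof
        fix v assume v: "v \<in> {1..m}"
        have "children m p v = {w \<in> {1..m}. g w = Some v}" by (rule children_fib[OF H v])
        then show "card (children m p v) \<in> Ps" using g(2) v unfolding okP_def fibc_def by simp
      qed
      show "t \<in> trees_P Ps m" using trees_iff[of t] T C unfolding r_def p_def by simp
    qed
  qed
  have "(\<Sum>t\<in>trees_P Ps m. monom 1 (chi k m (snd t))) = (\<Sum>t\<in>trees_P Ps m. (monom 1 (wt k {1..m} (tree_of m t)) :: 'a poly))"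
  proof (rule sum.cong[OF refl])
    fix t assume t: "t \<in> trees_P Ps m"
    obtain r p where rp: "t = (r, p)" by (cases t)
    have T: "(r, p) \<in> rooted_trees m" using t trees_iff rp by simp
    show "monom 1 (chi k m (snd t)) = monom 1 (wt k {1..m} (tree_of m t))" using to_chi[OF T, of k] rp by simp
  qed
  also have "\<dots> = (\<Sum>g\<in>X. monom 1 (wt k {1..m} g))"
    by (rule sum.reindex_bij_betw[OF bij])
  finally show ?thesis unfolding cnt_def X_def .
qed



lemma sum_Pow_card:
  fixes \<phi> :: "nat \<Rightarrow> 'b::comm_semiring_1"
  assumes fin: "finite A"
  shows "(\<Sum>D\<in>Pow A. \<phi> (card D)) = (\<Sum>i\<le>card A. of_nat (card A choose i) * \<phi> i)"
proof -
  have sub: "card ` Pow A \<subseteq> {..card A}"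
  proof
    fix c assume "c \<in> card ` Pow A"
    then obtain D where "D \<subseteq> A" "c = card D" by blast
    then show "c \<in> {..card A}" using card_mono[OF fin] by simp
  qed
  have "(\<Sum>D\<in>Pow A. \<phi> (card D)) = (\<Sum>i\<in>{..card A}. \<Sum>D\<in>{D. D \<in> Pow A \<and> card D = i}. \<phi> (card D))"
    by (rule sum.group[symmetric, OF _ _ sub]) (simp_all add: fin)
  also have "\<dots> = (\<Sum>i\<le>card A. of_nat (card A choose i) * \<phi> i)"
  proof (rule sum.cong[OF refl])
    fix i
    have "(\<Sum>D\<in>{D. D \<in> Pow A \<and> card D = i}. \<phi> (card D)) = (\<Sum>D\<in>{D. D \<in> Pow A \<and> card D = i}. \<phi> i)"
      by (rule sum.cong) auto
    also have "\<dots> = of_nat (card {D. D \<in> Pow A \<and> card D = i}) * \<phi> i" by simp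
    also have "card {D. D \<in> Pow A \<and> card D = i} = card A choose i"
      using n_subsets[OF fin, of i] by simp
    finally show "(\<Sum>D\<in>{D. D \<in> Pow A \<and> card D = i}. \<phi> (card D)) = of_nat (card A choose i) * \<phi> i" .
  qed
  finally show ?thesis .
qed

lemma combP:
  "(cnt k Ps (\<lambda>_ _. True) {1..n} :: 'a::comm_ring_1 poly) =
   (\<Sum>i\<le>n. of_nat (n choose i) * (cnt k Ps istotal {1..i} * cnt k Ps isforest {1..n - i}))"
proof -
  have "(cnt k Ps (\<lambda>_ _. True) {1..n} :: 'a poly) =
     (\<Sum>D\<in>Pow {1..n}. cnt k Ps istotal D * cnt k Ps isforest ({1..n} - D))"
    by (rule decompP) simp
  also have "\<dots> = (\<Sum>D\<in>Pow {1..n}. cnt k Ps istotal {1..card D} * cnt k Ps isforest {1..n - card D})"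
  proof (rule sum.cong[OF refl])
    fix D assume "D \<in> Pow {1..n}"
    then have D: "D \<subseteq> {1..n}" by blast
    then have fD: "finite D" using finite_subset by blast
    have c: "card ({1..n} - D) = n - card D" using card_Diff_subset[OF fD D] by simp
    have "(cnt k Ps istotal D :: 'a poly) = cnt k Ps istotal {1..card D}"
      by (rule cnt_card[OF fD]) (erule (1) inv_total)
    moreover have "(cnt k Ps isforest ({1..n} - D) :: 'a poly) = cnt k Ps isforest {1..card ({1..n} - D)}"
      by (rule cnt_card) (simp, erule (1) inv_forest)
    ultimately show "cnt k Ps istotal D * cnt k Ps isforest ({1..n} - D) =
        (cnt k Ps istotal {1..card D} * cnt k Ps isforest {1..n - card D} :: 'a poly)" using c by simp
  qed
  also have "\<dots> = (\<Sum>i\<le>n. of_nat (n choose i) * (cnt k Ps istotal {1..i} * cnt k Ps isforest {1..n - i}))"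
    using sum_Pow_card[of "{1..n}" "\<lambda>i. (cnt k Ps istotal {1..i} * cnt k Ps isforest {1..n - i} :: 'a poly)"]
    by simp
  finally show ?thesis .
qed

lemma combF:
  "(cnt k Ps isforest {1..Suc n} :: 'a::comm_ring_1 poly) =
   (\<Sum>i\<le>n. of_nat (n choose i) * (cnt k Ps istree {1..Suc i} * cnt k Ps isforest {1..n - i}))"
proof -
  let ?a = "Suc n"
  have "(cnt k Ps isforest {1..Suc n} :: 'a poly) =
     (\<Sum>D\<in>{D. D \<subseteq> {1..Suc n} \<and> ?a \<in> D}. cnt k Ps istree D * cnt k Ps isforest ({1..Suc n} - D))"
    by (rule decompF) simp_all
  also have "{D. D \<subseteq> {1..Suc n} \<and> ?a \<in> D} = insert ?a ` Pow {1..n}"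
  proof (rule set_eqI, rule iffI)
    fix D assume "D \<in> {D. D \<subseteq> {1..Suc n} \<and> ?a \<in> D}"
    then have D: "D \<subseteq> {1..Suc n}" "?a \<in> D" by auto
    have "D - {?a} \<subseteq> {1..n}" using D(1) by auto
    moreover have "D = insert ?a (D - {?a})" using D(2) by auto
    ultimately show "D \<in> insert ?a ` Pow {1..n}" by blast
  next
    fix D assume "D \<in> insert ?a ` Pow {1..n}"
    then obtain B where "B \<subseteq> {1..n}" "D = insert ?a B" by blast
    then show "D \<in> {D. D \<subseteq> {1..Suc n} \<and> ?a \<in> D}" by auto
  qed
  also have "(\<Sum>D\<in>insert ?a ` Pow {1..n}. cnt k Ps istree D * cnt k Ps isforest ({1..Suc n} - D)) =
      (\<Sum>B\<in>Pow {1..n}. (cnt k Ps istree (insert ?a B) * cnt k Ps isforest ({1..Suc n} - insert ?a B) :: 'a poly))"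
  proof (rule sum.reindex[unfolded comp_def])
    show "inj_on (insert ?a) (Pow {1..n})"
    proof (rule inj_onI)
      fix B1 B2 assume "B1 \<in> Pow {1..n}" "B2 \<in> Pow {1..n}" "insert ?a B1 = insert ?a B2"
      moreover have "?a \<notin> B1" "?a \<notin> B2" using calculation by auto
      ultimately show "B1 = B2" by (metis Diff_insert_absorb)
    qed
  qed
  also have "\<dots> = (\<Sum>B\<in>Pow {1..n}. cnt k Ps istree {1..Suc (card B)} * cnt k Ps isforest {1..n - card B})"
  proof (rule sum.cong[OF refl])
    fix B assume "B \<in> Pow {1..n}"
    then have B: "B \<subseteq> {1..n}" by blast
    then have fB: "finite B" using finite_subset by blast
    have aB: "?a \<notin> B" using B by auto
    have c1: "card (insert ?a B) = Suc (card B)" using fB aB by simp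
    have e: "{1..Suc n} - insert ?a B = {1..n} - B" using B by auto
    have c2: "card ({1..n} - B) = n - card B" using card_Diff_subset[OF fB B] by simp
    have "(cnt k Ps istree (insert ?a B) :: 'a poly) = cnt k Ps istree {1..card (insert ?a B)}"
      by (rule cnt_card) (simp add: fB, erule (1) inv_tree)
    moreover have "(cnt k Ps isforest ({1..n} - B) :: 'a poly) = cnt k Ps isforest {1..card ({1..n} - B)}"
      by (rule cnt_card) (simp, erule (1) inv_forest)
    ultimately show "cnt k Ps istree (insert ?a B) * cnt k Ps isforest ({1..Suc n} - insert ?a B) =
        (cnt k Ps istree {1..Suc (card B)} * cnt k Ps isforest {1..n - card B} :: 'a poly)"
      using c1 c2 e by simp
  qed
  also have "\<dots> = (\<Sum>i\<le>n. of_nat (n choose i) * (cnt k Ps istree {1..Suc i} * cnt k Ps isforest {1..n - i}))"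
    using sum_Pow_card[of "{1..n}" "\<lambda>i. (cnt k Ps istree {1..Suc i} * cnt k Ps isforest {1..n - i} :: 'a poly)"]
    by simp
  finally show ?thesis .
qed

lemma forest0: "(cnt k Ps isforest {1..0} :: 'a::comm_ring_1 poly) = 1"
proof -
  have "{f. pf {1..0} f \<and> okP Ps {1..0} f \<and> isforest {1..0} f} = {\<lambda>_. None}"
    unfolding pf_def okP_def isforest_def by (auto simp: fun_eq_iff)
  moreover have "wt k {1..0} (\<lambda>_. None) = 0" unfolding wt_def by simp
  ultimately show ?thesis unfolding cnt_def by simp
qed

lemma tree0: "(cnt k Ps istree {1..0} :: 'a::comm_ring_1 poly) = 0"
proof -
  have S: "{f. pf {1..0} f \<and> okP Ps {1..0} f \<and> istree {1..0} f} = {}"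
    unfolding istree_def by auto
  show ?thesis unfolding cnt_def S by simp
qed



lemma ni_unique:
  assumes "of_nat n * x = (1::'a::comm_ring_1)"
  shows "natinv n = x"
  unfolding natinv_def
proof (rule the_equality)
  show "of_nat n * x = 1" by (rule assms)
  fix y :: 'a assume y: "of_nat n * y = 1"
  have "y = y * (of_nat n * x)" using assms by simp
  also have "\<dots> = (of_nat n * y) * x" by (simp add: ac_simps)
  also have "\<dots> = x" using y by simp
  finally show "y = x" .
qed

context
  assumes Q: "\<forall>n::nat. n > 0 \<longrightarrow> (\<exists>x::'a::comm_ring_1. of_nat n * x = 1)"
begin

lemma ni_mult: "n > 0 \<Longrightarrow> of_nat n * (natinv n :: 'a) = 1"
proof -
  assume "n > 0"
  then obtain x :: 'a where x: "of_nat n * x = 1" using Q by blast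
  then show ?thesis using ni_unique[OF x] by simp
qed

lemma ni_prod: "a > 0 \<Longrightarrow> b > 0 \<Longrightarrow> (natinv (a * b) :: 'a) = natinv a * natinv b"
proof -
  assume a: "a > 0" and b: "b > 0"
  have "of_nat (a * b) * (natinv a * natinv b :: 'a) = (of_nat a * natinv a) * (of_nat b * natinv b)"
    by (simp add: ac_simps)
  also have "\<dots> = 1" using ni_mult[OF a] ni_mult[OF b] by simp
  finally show ?thesis by (rule ni_unique)
qed

lemma K1: "i \<le> n \<Longrightarrow> (natinv (fact n) :: 'a) * of_nat (n choose i) = natinv (fact i) * natinv (fact (n - i))"
proof -
  assume i: "i \<le> n"
  have e: "(fact n :: nat) = fact i * fact (n - i) * (n choose i)" using binomial_fact_lemma[OF i] by simp
  have c: "(n choose i) > 0" using i by simp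
  have f1: "(fact i :: nat) > 0" and f2: "(fact (n - i) :: nat) > 0" by simp_all
  have "(natinv (fact n) :: 'a) = natinv (fact i) * natinv (fact (n - i)) * natinv (n choose i)"
    unfolding e using ni_prod f1 f2 c by (simp add: ni_prod)
  then have "(natinv (fact n) :: 'a) * of_nat (n choose i) =
      natinv (fact i) * natinv (fact (n - i)) * (natinv (n choose i) * of_nat (n choose i))"
    by (simp add: ac_simps)
  also have "natinv (n choose i) * of_nat (n choose i) = (1::'a)" using ni_mult[OF c] by (simp add: ac_simps)
  finally show ?thesis by simp
qed

lemma K2: "of_nat (Suc n) * (natinv (fact (Suc n)) :: 'a) = natinv (fact n)"
proof -
  have "(fact (Suc n) :: nat) = Suc n * fact n" by simp
  then have "(natinv (fact (Suc n)) :: 'a) = natinv (Suc n) * natinv (fact n)"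
    using ni_prod[of "Suc n" "fact n"] by simp
  then have "of_nat (Suc n) * (natinv (fact (Suc n)) :: 'a) = (of_nat (Suc n) * natinv (Suc n)) * natinv (fact n)"
    by (simp add: ac_simps)
  also have "\<dots> = natinv (fact n)" using ni_mult[of "Suc n"] by simp
  finally show ?thesis .
qed

lemma ni_1: "(natinv 1 :: 'a) = 1"
  by (rule ni_unique) simp

lemma cancel: "of_nat (Suc n) * (c :: 'a poly) = 0 \<Longrightarrow> c = 0"
proof -
  assume H: "of_nat (Suc n) * c = 0"
  have "of_nat (Suc n) * c = smult (of_nat (Suc n)) c" by (simp add: of_nat_poly)
  then have "smult (natinv (Suc n)) (smult (of_nat (Suc n)) c) = 0" using H by simp
  then have "smult (natinv (Suc n) * of_nat (Suc n)) c = 0" by simp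
  moreover have "natinv (Suc n) * of_nat (Suc n) = (1::'a)" using ni_mult[of "Suc n"] by (simp add: ac_simps)
  ultimately show "c = 0" by simp
qed

end

lemma P1: "(of_nat m :: 'a::comm_ring_1 poly) * p = smult (of_nat m) p"
  by (simp add: of_nat_poly)

lemma P2: "smult c (sum f S) = (\<Sum>i\<in>S. smult c (f i))"
  by (induction S rule: infinite_finite_induct) (simp_all add: smult_add_right)

lemma ode_unique:
  fixes X Y D :: "'b::comm_ring_1 fps"
  assumes XD: "fps_deriv X = D * X" and YD: "fps_deriv Y = D * Y" and X0: "X $ 0 = Y $ 0"
    and canc: "\<And>n c. of_nat (Suc n) * c = (0::'b) \<Longrightarrow> c = 0"
  shows "X = Y"
proof -
  have "\<forall>m\<le>n. X $ m = Y $ m" for n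
  proof (induction n)
    case 0 then show ?case using X0 by simp
  next
    case (Suc n)
    have "of_nat (Suc n) * X $ (Suc n) = fps_deriv X $ n" by simp
    also have "\<dots> = (D * X) $ n" using XD by simp
    also have "\<dots> = (\<Sum>i=0..n. D $ i * X $ (n - i))" by (rule fps_mult_nth)
    also have "\<dots> = (\<Sum>i=0..n. D $ i * Y $ (n - i))" using Suc.IH by (intro sum.cong) auto
    also have "\<dots> = (D * Y) $ n" by (rule fps_mult_nth[symmetric])
    also have "\<dots> = fps_deriv Y $ n" using YD by simp
    also have "\<dots> = of_nat (Suc n) * Y $ (Suc n)" by simp
    finally have "of_nat (Suc n) * (X $ (Suc n) - Y $ (Suc n)) = 0" by (simp add: algebra_simps)
    then have "X $ Suc n = Y $ Suc n" using canc by fastforce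
    then show ?case using Suc.IH le_Suc_eq by auto
  qed
  then show ?thesis by (intro fps_ext) auto
qed



context
  assumes Q: "\<forall>n::nat. n > 0 \<longrightarrow> (\<exists>x::'a::comm_ring_1. of_nat n * x = 1)"
begin

lemma exp_deriv:
  fixes T :: "'a poly fps"
  assumes T0: "T $ 0 = 0"
  shows "fps_deriv (fps_exp_of T) = fps_deriv T * fps_exp_of T"
proof -
  define c where "c j = fps_const [:natinv (fact j) :: 'a:]" for j
  define S where "S N = (\<Sum>j\<le>N. c j * T ^ j)" for N
  have Snth: "S N $ m = (\<Sum>j\<le>N. smult (natinv (fact j)) ((T ^ j) $ m))" for N m
    unfolding S_def c_def fps_sum_nth by simp
  have Enth: "fps_exp_of T $ m = (\<Sum>j\<le>m. smult (natinv (fact j)) ((T ^ j) $ m))" for m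
    unfolding fps_exp_of_def by simp
  have E_S: "fps_exp_of T $ m = S N $ m" if mN: "m \<le> N" for m N
  proof -
    have "(\<Sum>j\<le>N. smult (natinv (fact j)) ((T ^ j) $ m)) = (\<Sum>j\<le>m. smult (natinv (fact j)) ((T ^ j) $ m))"
    proof (rule sum.mono_neutral_right)
      show "finite {..N}" by simp
      show "{..m} \<subseteq> {..N}" using mN by simp
      show "\<forall>j\<in>{..N} - {..m}. smult (natinv (fact j)) ((T ^ j) $ m) = 0"
      proof
        fix j assume "j \<in> {..N} - {..m}"
        then have "m < j" by simp
        then have "(T ^ j) $ m = 0" using startsby_zero_power_prefix[OF T0] by blast
        then show "smult (natinv (fact j)) ((T ^ j) $ m) = 0" by simp
      qed
    qed
    then show ?thesis unfolding Enth Snth by simp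
  qed
  have cS: "c (Suc j) * fps_const (of_nat (Suc j)) = c j" for j
  proof -
    have eq: "[:natinv (fact (Suc j)) :: 'a:] * of_nat (Suc j) = [:natinv (fact j):]"
    proof -
      have "[:natinv (fact (Suc j)) :: 'a:] * of_nat (Suc j) = [:of_nat (Suc j) * natinv (fact (Suc j)):]"
        by (simp add: of_nat_poly ac_simps)
      also have "\<dots> = [:natinv (fact j):]" using K2[OF Q] by simp
      finally show ?thesis .
    qed
    show ?thesis unfolding c_def by (simp only: fps_const_mult eq)
  qed
  have SD: "fps_deriv (S (Suc N)) = fps_deriv T * S N" for N
  proof -
    have "fps_deriv (S (Suc N)) = (\<Sum>j\<le>Suc N. c j * fps_deriv (T ^ j))"
      unfolding S_def c_def by (simp add: fps_deriv_sum)
    also have "\<dots> = (\<Sum>j\<le>Suc N. c j * (fps_const (of_nat j) * fps_deriv T * T ^ (j - 1)))"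
      by (simp only: fps_deriv_power)
    also have "\<dots> = (\<Sum>j\<le>N. c (Suc j) * (fps_const (of_nat (Suc j)) * fps_deriv T * T ^ j))"
      by (subst sum.atMost_Suc_shift) simp
    also have "\<dots> = (\<Sum>j\<le>N. fps_deriv T * (c j * T ^ j))"
    proof (rule sum.cong[OF refl])
      fix j
      have "c (Suc j) * (fps_const (of_nat (Suc j)) * fps_deriv T * T ^ j) =
            fps_deriv T * ((c (Suc j) * fps_const (of_nat (Suc j))) * T ^ j)" by (simp only: mult_ac)
      also have "\<dots> = fps_deriv T * (c j * T ^ j)" by (simp only: cS)
      finally show "c (Suc j) * (fps_const (of_nat (Suc j)) * fps_deriv T * T ^ j) = fps_deriv T * (c j * T ^ j)" .
    qed
    also have "\<dots> = fps_deriv T * S N" unfolding S_def by (simp add: sum_distrib_left)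
    finally show ?thesis .
  qed
  show ?thesis
  proof (rule fps_ext)
    fix m
    have "fps_deriv (fps_exp_of T) $ m = of_nat (Suc m) * fps_exp_of T $ Suc m" by simp
    also have "\<dots> = of_nat (Suc m) * S (Suc m) $ Suc m" using E_S[of "Suc m" "Suc m"] by simp
    also have "\<dots> = fps_deriv (S (Suc m)) $ m" by simp
    also have "\<dots> = (fps_deriv T * S m) $ m" using SD by simp
    also have "\<dots> = (\<Sum>i=0..m. fps_deriv T $ i * S m $ (m - i))" by (rule fps_mult_nth)
    also have "\<dots> = (\<Sum>i=0..m. fps_deriv T $ i * fps_exp_of T $ (m - i))"
    proof (rule sum.cong[OF refl])
      fix i assume "i \<in> {0..m}"
      have "fps_exp_of T $ (m - i) = S m $ (m - i)" by (rule E_S) simp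
      then show "fps_deriv T $ i * S m $ (m - i) = fps_deriv T $ i * fps_exp_of T $ (m - i)" by simp
    qed
    also have "\<dots> = (fps_deriv T * fps_exp_of T) $ m" by (rule fps_mult_nth[symmetric])
    finally show "fps_deriv (fps_exp_of T) $ m = (fps_deriv T * fps_exp_of T) $ m" .
  qed
qed

end



theorem theorem5p11:
  fixes k :: nat and Ps :: "nat set"
  assumes Q_alg: "\<forall>n::nat. n > 0 \<longrightarrow> (\<exists>x::'a::comm_ring_1. of_nat n * x = 1)"
  shows "(Pgf k Ps :: 'a poly fps) = Fgf k Ps * fps_exp_of (Tgf k Ps)"
proof -
  note Q = Q_alg
  define Fr :: "nat \<Rightarrow> 'a poly" where "Fr i = cnt k Ps istotal {1..i}" for i
  define Gr :: "nat \<Rightarrow> 'a poly" where "Gr i = cnt k Ps isforest {1..i}" for i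
  define Tr :: "nat \<Rightarrow> 'a poly" where "Tr i = cnt k Ps istree {1..i}" for i
  define Gs :: "'a poly fps" where "Gs = Abs_fps (\<lambda>j. smult (natinv (fact j)) (Gr j))"
  define T :: "'a poly fps" where "T = Tgf k Ps"
  have Gsn: "Gs $ n = smult (natinv (fact n)) (Gr n)" for n unfolding Gs_def by simp
  have Tn: "T $ n = smult (natinv (fact n)) (Tr n)" for n
    unfolding T_def Tgf_def Tr_def using Traw[where 'a='a and Ps=Ps and m=n and k=k] by simp
  have Fn: "Fgf k Ps $ n = smult (natinv (fact n)) (Fr n)" for n
    unfolding Fgf_def Fr_def using Fraw[where 'a='a and Ps=Ps and n=n and k=k] by simp
  have Pn: "(Pgf k Ps :: 'a poly fps) $ n = smult (natinv (fact n)) (cnt k Ps (\<lambda>_ _. True) {1..n})" for n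
    unfolding Pgf_def using Praw[where 'a='a and Ps=Ps and n=n and k=k] by simp
  have T0: "T $ 0 = 0" unfolding Tn Tr_def using tree0[where 'a='a and k=k and Ps=Ps] by simp
  have PG: "Pgf k Ps = Fgf k Ps * Gs"
  proof (rule fps_ext)
    fix n
    have "(Pgf k Ps :: 'a poly fps) $ n = smult (natinv (fact n)) (\<Sum>i\<le>n. of_nat (n choose i) * (Fr i * Gr (n - i)))"
      unfolding Pn combP Fr_def Gr_def ..
    also have "\<dots> = (\<Sum>i\<le>n. smult (natinv (fact n) * of_nat (n choose i)) (Fr i * Gr (n - i)))"
      by (simp add: P1 P2)
    also have "\<dots> = (\<Sum>i\<le>n. smult (natinv (fact i) * natinv (fact (n - i))) (Fr i * Gr (n - i)))"
      by (rule sum.cong[OF refl]) (simp add: K1[OF Q])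
    also have "\<dots> = (\<Sum>i=0..n. Fgf k Ps $ i * Gs $ (n - i))"
      unfolding Fn Gsn atLeast0AtMost by (simp add: ac_simps)
    also have "\<dots> = (Fgf k Ps * Gs) $ n" by (rule fps_mult_nth[symmetric])
    finally show "Pgf k Ps $ n = (Fgf k Ps * Gs) $ n" .
  qed
  have GD: "fps_deriv Gs = fps_deriv T * Gs"
  proof (rule fps_ext)
    fix n
    have "fps_deriv Gs $ n = of_nat (Suc n) * smult (natinv (fact (Suc n))) (Gr (Suc n))"
      by (simp add: Gsn del: of_nat_Suc fact_Suc)
    also have "\<dots> = smult (of_nat (Suc n) * natinv (fact (Suc n))) (Gr (Suc n))"
      by (simp only: P1 smult_smult)
    also have "\<dots> = smult (natinv (fact n)) (\<Sum>i\<le>n. of_nat (n choose i) * (Tr (Suc i) * Gr (n - i)))"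
      unfolding K2[OF Q] Gr_def Tr_def combF ..
    also have "\<dots> = (\<Sum>i\<le>n. smult (natinv (fact n) * of_nat (n choose i)) (Tr (Suc i) * Gr (n - i)))"
      by (simp add: P1 P2)
    also have "\<dots> = (\<Sum>i\<le>n. smult (natinv (fact i) * natinv (fact (n - i))) (Tr (Suc i) * Gr (n - i)))"
      by (rule sum.cong[OF refl]) (simp add: K1[OF Q])
    also have "\<dots> = (\<Sum>i=0..n. fps_deriv T $ i * Gs $ (n - i))"
      unfolding atLeast0AtMost
    proof (rule sum.cong[OF refl])
      fix i
      have "fps_deriv T $ i = of_nat (Suc i) * smult (natinv (fact (Suc i))) (Tr (Suc i))"
        by (simp add: Tn del: of_nat_Suc fact_Suc)
      also have "\<dots> = smult (of_nat (Suc i) * natinv (fact (Suc i))) (Tr (Suc i))"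
        by (simp only: P1 smult_smult)
      also have "\<dots> = smult (natinv (fact i)) (Tr (Suc i))" unfolding K2[OF Q] ..
      finally have "fps_deriv T $ i = smult (natinv (fact i)) (Tr (Suc i))" .
      then show "smult (natinv (fact i) * natinv (fact (n - i))) (Tr (Suc i) * Gr (n - i)) =
          fps_deriv T $ i * Gs $ (n - i)" unfolding Gsn by (simp add: mult.commute)
    qed
    also have "\<dots> = (fps_deriv T * Gs) $ n" by (rule fps_mult_nth[symmetric])
    finally show "fps_deriv Gs $ n = (fps_deriv T * Gs) $ n" .
  qed
  have ED: "fps_deriv (fps_exp_of T) = fps_deriv T * fps_exp_of T" by (rule exp_deriv[OF Q T0])
  have G0: "Gs $ 0 = 1" unfolding Gsn Gr_def using forest0[where 'a='a and k=k and Ps=Ps] ni_1[OF Q] by simp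
  have E0: "fps_exp_of T $ 0 = 1" unfolding fps_exp_of_def using ni_1[OF Q] by simp
  have "Gs = fps_exp_of T"
    by (rule ode_unique[OF GD ED]) (simp_all add: G0 E0 cancel[OF Q])
  then show ?thesis using PG unfolding T_def by simp
qed


end
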